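(* Let $\alpha\in(0,1)\cup(1,\infty)$ and let $\rho_{XABC}=\sum_x p_X(x)|x\rangle\langle x|_X\otimes\rho^x_{ABC}$, where $p_X$ is a probability distribution on a finite set, $\{|x\rangle\}$ is orthonormal, and each $\rho^x_{ABC}$ is a state on a finite-dimensional $\mathcal{H}_A\otimes\mathcal{H}_B\otimes\mathcal{H}_C$. Then $$I_\alpha(A;B|CX)_\rho=\frac{\alpha}{\alpha-1}\log\sum_x p_X(x)\exp\Big\{\Big(\frac{\alpha-1}{\alpha}\Big)I_\alpha(A;B|C)_{\rho^x}\Big\}.$$
   Context: $\log$ is the natural logarithm. For a positive semi-definite $M$ and function $f$, $f(M)$ applies $f$ only to nonzero eigenvalues (negative powers are generalized inverses on the support). For a state $\rho_{ABE}$ and $\alpha\in(0,1)\cup(1,\infty)$, $$I_\alpha(A;B|E)_\rho=\frac{\alpha}{\alpha-1}\log\mathrm{Tr}\Big\{\Big(\rho_E^{(\alpha-1)/2}\,\mathrm{Tr}_A\big\{\rho_{AE}^{(1-\alpha)/2}\rho_{ABE}^{\alpha}\rho_{AE}^{(1-\alpha)/2}\big\}\,\rho_E^{(\alpha-1)/2}\Big)^{1/\alpha}\Big\},$$ with the conditioning system $E$ taken to be the composite $CX$ on the left-hand side. *)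

theory Defs
  imports "HOL-Analysis.Analysis"
begin

text \<open>Finite-dimensional quantum systems: a system with orthonormal basis indexed by a
finite type 'n; operators are matrices complex^'n^'n (in that basis).  Composite systems
are indexed by product types (tensor product).\<close>

type_synonym 'n op = "complex^'n^'n"

definition adj :: "'n::finite op \<Rightarrow> 'n op" where
  "adj M = (\<chi> i j. cnj (M $ j $ i))"

definition unitary :: "'n::finite op \<Rightarrow> bool" where
  "unitary U \<longleftrightarrow> U ** adj U = mat 1 \<and> adj U ** U = mat 1"

definition hermitian :: "'n::finite op \<Rightarrow> bool" where
  "hermitian M \<longleftrightarrow> adj M = M"

definition psd :: "'n::finite op \<Rightarrow> bool" where
  "psd M \<longleftrightarrow> hermitian M \<and>
     (\<forall>v::complex^'n. 0 \<le> Re (\<Sum>i\<in>UNIV. \<Sum>j\<in>UNIV. cnj (v $ i) * M $ i $ j * v $ j))"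

definition mtrace :: "'n::finite op \<Rightarrow> complex" where
  "mtrace M = (\<Sum>i\<in>UNIV. M $ i $ i)"

definition qstate :: "'n::finite op \<Rightarrow> bool" where
  "qstate M \<longleftrightarrow> psd M \<and> mtrace M = 1"

definition rdiag :: "('n::finite \<Rightarrow> real) \<Rightarrow> 'n op" where
  "rdiag d = (\<chi> i j. if i = j then complex_of_real (d i) else 0)"

text \<open>Functional calculus: for a PSD (Hermitian) M = U diag(d) U*, f(M) applies f only to the
nonzero eigenvalues (zero eigenvalues are mapped to 0), i.e. f acts on the support.\<close>
definition mfun :: "(real \<Rightarrow> real) \<Rightarrow> 'n::finite op \<Rightarrow> 'n op" where
  "mfun f M = (SOME N. \<exists>U d. unitary U \<and> M = U ** rdiag d ** adj U \<and>
       N = U ** rdiag (\<lambda>i. if d i = 0 then 0 else f (d i)) ** adj U)"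

definition mpow :: "'n::finite op \<Rightarrow> real \<Rightarrow> 'n op" where
  "mpow M p = mfun (\<lambda>x. x powr p) M"

definition ptrB :: "('a::finite \<times> 'b::finite \<times> 'e::finite) op \<Rightarrow> ('a \<times> 'e) op" where
  "ptrB M = (\<chi> i j. case (i, j) of ((a,e), (a',e')) \<Rightarrow> \<Sum>b\<in>UNIV. M $ (a,b,e) $ (a',b,e'))"

definition ptrA_ABE :: "('a::finite \<times> 'b::finite \<times> 'e::finite) op \<Rightarrow> ('b \<times> 'e) op" where
  "ptrA_ABE M = (\<chi> i j. case (i, j) of ((b,e), (b',e')) \<Rightarrow> \<Sum>a\<in>UNIV. M $ (a,b,e) $ (a,b',e'))"

definition ptrA :: "('a::finite \<times> 'e::finite) op \<Rightarrow> 'e op" where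
  "ptrA M = (\<chi> e e'. \<Sum>a\<in>UNIV. M $ (a,e) $ (a,e'))"

text \<open>P_{AE} \<otimes> I_B on A \<otimes> B \<otimes> E, and P_E \<otimes> I_B on B \<otimes> E.\<close>
definition extB :: "('a::finite \<times> 'e::finite) op \<Rightarrow> ('a \<times> 'b::finite \<times> 'e) op" where
  "extB P = (\<chi> i j. case (i, j) of ((a,b,e), (a',b',e')) \<Rightarrow> if b = b' then P $ (a,e) $ (a',e') else 0)"

definition extB' :: "'e::finite op \<Rightarrow> ('b::finite \<times> 'e) op" where
  "extB' P = (\<chi> i j. case (i, j) of ((b,e), (b',e')) \<Rightarrow> if b = b' then P $ e $ e' else 0)"

definition renyi_cmi :: "real \<Rightarrow> ('a::finite \<times> 'b::finite \<times> 'e::finite) op \<Rightarrow> real" where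
  "renyi_cmi \<alpha> \<rho> =
    (let \<rho>AE = ptrB \<rho>; \<rho>E = ptrA \<rho>AE;
         inner = ptrA_ABE (extB (mpow \<rho>AE ((1 - \<alpha>) / 2)) ** mpow \<rho> \<alpha>
                             ** extB (mpow \<rho>AE ((1 - \<alpha>) / 2)))
                   :: ('b \<times> 'e) op;
         outer = extB' (mpow \<rho>E ((\<alpha> - 1) / 2)) ** inner ** extB' (mpow \<rho>E ((\<alpha> - 1) / 2))
     in \<alpha> / (\<alpha> - 1) * ln (Re (mtrace (mpow outer (1 / \<alpha>)))))"

text \<open>Classical-quantum state rho_{XABC} = sum_x p(x) |x><x| \<otimes> rho^x_{ABC}, arranged on
A \<otimes> B \<otimes> (C \<otimes> X) so that the conditioning system is E = CX.\<close>
definition cq_state :: "('x::finite \<Rightarrow> real) \<Rightarrow> ('x \<Rightarrow> ('a::finite \<times> 'b::finite \<times> 'c::finite) op)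
     \<Rightarrow> ('a \<times> 'b \<times> ('c \<times> 'x)) op" where
  "cq_state p \<rho>x = (\<chi> i j. case (i, j) of ((a,b,(c,x)), (a',b',(c',x'))) \<Rightarrow>
      if x = x' then complex_of_real (p x) * \<rho>x x $ (a,b,c) $ (a',b',c') else 0)"

end

theory Submission
  imports Defs
begin

definition cin :: "complex^'n::finite \<Rightarrow> complex^'n \<Rightarrow> complex" where
  "cin v w = (\<Sum>i\<in>UNIV. cnj (v$i) * w$i)"

lemma cin_cnj: "cnj (cin v w) = cin w v"
  by (simp add: cin_def mult.commute)

lemma cin_add_right: "cin v (w + z) = cin v w + cin v z"
  by (simp add: cin_def distrib_left sum.distrib)
lemma cin_add_left: "cin (v + w) z = cin v z + cin w z"
  by (simp add: cin_def distrib_right sum.distrib)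
lemma cin_diff_right: "cin v (w - z) = cin v w - cin v z"
  by (simp add: cin_def right_diff_distrib sum_subtractf)
lemma cin_diff_left: "cin (v - w) z = cin v z - cin w z"
  by (simp add: cin_def left_diff_distrib sum_subtractf)
lemma cin_scale_right: "cin v (c *s w) = c * cin v w"
  by (simp add: cin_def sum_distrib_left mult.left_commute)
lemma cin_scale_left: "cin (c *s v) w = cnj c * cin v w"
  by (simp add: cin_def sum_distrib_left mult.assoc)
lemma cin_zero_right[simp]: "cin v 0 = 0" by (simp add: cin_def)
lemma cin_zero_left[simp]: "cin 0 v = 0" by (simp add: cin_def)

lemma norm_vec_sq: "(norm (v::complex^'n::finite))^2 = (\<Sum>i\<in>UNIV. (cmod (v$i))^2)"
  unfolding norm_vec_def L2_set_def by (rule real_sqrt_pow2) (simp add: sum_nonneg)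

lemma cin_self: "cin v v = of_real ((norm v)^2)"
proof -
  have "cin v v = (\<Sum>i\<in>UNIV. of_real ((cmod (v$i))^2))"
    unfolding cin_def by (rule sum.cong) (simp_all only: complex_norm_square mult.commute)
  also have "\<dots> = of_real ((norm v)^2)"
    by (simp only: norm_vec_sq of_real_sum)
  finally show ?thesis .
qed

lemma cin_self_eq0: "cin v v = 0 \<longleftrightarrow> v = 0"
  by (simp add: cin_self)

lemma herm_cin: assumes "hermitian M"
  shows "cin v (M *v w) = cin (M *v v) w"
proof -
  have M: "\<And>i j. M $ i $ j = cnj (M $ j $ i)"
    using assms unfolding hermitian_def adj_def by (metis vec_lambda_beta)
  have "cin v (M *v w) = (\<Sum>i\<in>UNIV. \<Sum>j\<in>UNIV. cnj (v$i) * (M$i$j * w$j))"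
    by (simp add: cin_def matrix_vector_mult_def sum_distrib_left)
  also have "\<dots> = (\<Sum>j\<in>UNIV. \<Sum>i\<in>UNIV. cnj (v$i) * (M$i$j * w$j))"
    by (rule sum.swap)
  also have "\<dots> = cin (M *v v) w"
    unfolding cin_def matrix_vector_mult_def vec_lambda_beta cnj_sum sum_distrib_right
  proof (rule sum.cong[OF refl], rule sum.cong[OF refl])
    fix i j show "cnj (v $ j) * (M $ j $ i * w $ i) = cnj (M $ i $ j * v $ j) * w $ i"
      by (subst M[of j i]) (simp add: mult_ac)
  qed
  finally show ?thesis .
qed

lemma herm_quad_real: assumes "hermitian M"
  shows "cnj (cin v (M *v v)) = cin v (M *v v)"
  using herm_cin[OF assms, of v v] cin_cnj by metis

lemma quad_zero: fixes a c :: real assumes "\<And>t. 2 * t * a \<le> t^2 * c" shows "a = 0"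
proof (rule ccontr)
  assume a: "a \<noteq> 0"
  define D where "D = \<bar>c\<bar> + 1"
  have d: "D > 0" unfolding D_def by simp
  define t where "t = a / D"
  have "2 * t * a \<le> t^2 * c" by (rule assms)
  hence "(2 * t * a) * D^2 \<le> (t^2 * c) * D^2" using d by (simp add: mult_right_mono)
  hence "2 * a * a * D \<le> a^2 * c"
    using d by (simp add: t_def power2_eq_square field_simps)
  moreover have "a^2 * c \<le> a^2 * \<bar>c\<bar>" by (simp add: mult_left_mono)
  moreover have "a^2 > 0" using a by simp
  ultimately have "a^2 * (2 * D) \<le> a^2 * \<bar>c\<bar>" by (simp add: power2_eq_square algebra_simps)
  hence "2 * D \<le> \<bar>c\<bar>" using \<open>a^2 > 0\<close> by simp
  thus False unfolding D_def by simp
qed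

lemma mv_scale: "A *v (c *s x) = c *s (A *v (x::'a::comm_ring_1^'n::finite))"
  by (simp add: vec_eq_iff matrix_vector_mult_def sum_distrib_left mult_ac)
lemma mv_add: "A *v (x + y) = A *v x + A *v (y::'a::comm_ring_1^'n::finite)"
  by (simp add: vec_eq_iff matrix_vector_mult_def sum.distrib algebra_simps)
lemma mv_diff: "A *v (x - y) = A *v x - A *v (y::'a::comm_ring_1^'n::finite)"
  by (simp add: vec_eq_iff matrix_vector_mult_def sum_subtractf algebra_simps)

lemma cin_cont: "continuous_on UNIV (\<lambda>w. cin u (w::complex^'n::finite))"
  unfolding cin_def by (intro continuous_intros)

lemma quad_cont: "continuous_on UNIV (\<lambda>w. Re (cin w (M *v (w::complex^'n::finite))))"
  unfolding cin_def matrix_vector_mult_def by (intro continuous_intros)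

lemma max_eigvec:
  fixes M :: "'n::finite op"
  assumes herm: "hermitian M"
  and S: "S = {w. \<forall>j\<in>J. cin (u j) w = 0}"
  and eig: "\<And>j. j \<in> J \<Longrightarrow> M *v u j = complex_of_real (e j) *s u j"
  and ne: "w0 \<in> S" "w0 \<noteq> 0"
  shows "\<exists>v\<in>S. norm v = 1 \<and> (\<exists>l::real. M *v v = complex_of_real l *s v)"
proof -
  have Ssub: "c *s x + d *s y \<in> S" if "x \<in> S" "y \<in> S" for x y c d
    using that unfolding S by (simp add: cin_add_right cin_scale_right)
  have Sinv: "M *v x \<in> S" if "x \<in> S" for x
  proof -
    have "cin (u j) (M *v x) = 0" if j: "j \<in> J" for j
      using that \<open>x \<in> S\<close> unfolding S herm_cin[OF herm] eig[OF j]
      by (simp add: cin_scale_left)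
    thus ?thesis unfolding S by blast
  qed
  define q where "q w = Re (cin w (M *v w))" for w
  define K where "K = S \<inter> sphere 0 1"
  have clS: "closed S"
  proof -
    have "S = (\<Inter>j\<in>J. {w. cin (u j) w = 0})" unfolding S by blast
    moreover have "closed {w. cin (u j) w = 0}" for j
      using continuous_closed_preimage_constant[OF cin_cont[of "u j"] closed_UNIV] by simp
    ultimately show ?thesis by auto
  qed
  have cK: "compact K" unfolding K_def using clS compact_sphere by (rule closed_Int_compact)
  have w1: "(1 / norm w0) *\<^sub>R w0 \<in> K"
  proof -
    have "(1 / norm w0) *\<^sub>R w0 = complex_of_real (1/norm w0) *s w0"
      by (simp add: vec_eq_iff scaleR_conv_of_real[where 'a=complex])
    also have "\<dots> \<in> S" using Ssub[OF ne(1) ne(1), of "complex_of_real (1/norm w0)" 0] by simp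
    finally show ?thesis unfolding K_def using ne(2) by simp
  qed
  hence "K \<noteq> {}" by auto
  from continuous_attains_sup[OF cK this continuous_on_subset[OF quad_cont[of M] subset_UNIV]]
  obtain v where vK: "v \<in> K" and vmax: "\<And>y. y \<in> K \<Longrightarrow> q y \<le> q v"
    unfolding q_def by blast
  have vS: "v \<in> S" and nv: "norm v = 1" using vK unfolding K_def by auto
  have cvv: "cin v v = 1" using nv by (simp add: cin_self)
  define \<mu> where "\<mu> = q v"
  have qscale: "q (complex_of_real c *s z) = c^2 * q z" for c z
    unfolding q_def by (simp add: cin_scale_left cin_scale_right mv_scale power2_eq_square)
  have ofr: "complex_of_real r *s z = r *\<^sub>R z" for r and z :: "complex^'n"
    by (simp add: vec_eq_iff scaleR_conv_of_real[where 'a=complex])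
  have qle: "q z \<le> \<mu> * (norm z)^2" if zS: "z \<in> S" for z
  proof (cases "z = 0")
    case True thus ?thesis by (simp add: q_def matrix_vector_mult_def cin_def)
  next
    case False
    define y where "y = complex_of_real (1 / norm z) *s z"
    have "y \<in> S" unfolding y_def using Ssub[OF zS zS, of "complex_of_real (1/norm z)" 0] by simp
    moreover have "norm y = 1" unfolding y_def ofr using False by simp
    ultimately have "y \<in> K" unfolding K_def by simp
    hence "q y \<le> \<mu>" using vmax unfolding \<mu>_def by blast
    hence "(1/norm z)^2 * q z \<le> \<mu>" unfolding y_def qscale .
    thus ?thesis using False by (simp add: field_simps power2_eq_square)
  qed
  have perturb: "Re (cin w (M *v v)) = 0" if wS: "w \<in> S" and wv: "cin v w = 0" for w
  proof -
    define a where "a = Re (cin w (M *v v))"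
    have wv': "cin w v = 0" using wv cin_cnj by (metis complex_cnj_zero)
    have av: "Re (cin v (M *v w)) = a"
    proof -
      have "cin v (M *v w) = cnj (cin w (M *v v))"
        using herm_cin[OF herm, of v w] cin_cnj[of w "M *v v"] by simp
      thus ?thesis unfolding a_def by simp
    qed
    { fix t :: real
      define z where "z = v + complex_of_real t *s w"
      have zS: "z \<in> S" unfolding z_def using Ssub[OF vS wS, of 1 "complex_of_real t"] by simp
      have "cin z (M *v z) = cin v (M *v v) + complex_of_real t * cin v (M *v w)
           + complex_of_real t * cin w (M *v v) + complex_of_real (t^2) * cin w (M *v w)"
        unfolding z_def by (simp add: mv_add mv_scale cin_add_left cin_add_right cin_scale_left
           cin_scale_right power2_eq_square algebra_simps)
      hence qz: "q z = \<mu> + 2 * t * a + t^2 * q w"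
        unfolding q_def \<mu>_def using av unfolding a_def by (simp add: q_def)
      have "cin z z = cin v v + complex_of_real (t^2) * cin w w"
        unfolding z_def by (simp add: cin_add_left cin_add_right cin_scale_left
           cin_scale_right power2_eq_square algebra_simps wv wv')
      hence "complex_of_real ((norm z)^2) = 1 + complex_of_real (t^2) * complex_of_real ((norm w)^2)"
        unfolding cvv by (simp only: cin_self)
      hence "complex_of_real ((norm z)^2) = complex_of_real (1 + t^2 * (norm w)^2)"
        by (simp only: of_real_add of_real_mult of_real_1)
      hence nz: "(norm z)^2 = 1 + t^2 * (norm w)^2"
        by (simp only: of_real_eq_iff)
      have "\<mu> + 2 * t * a + t^2 * q w \<le> \<mu> * (1 + t^2 * (norm w)^2)"
        using qle[OF zS] unfolding qz nz .
      hence "2 * t * a \<le> t^2 * (\<mu> * (norm w)^2 - q w)" by (simp add: algebra_simps) }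
    thus ?thesis using quad_zero unfolding a_def by blast
  qed
  have orth: "cin w (M *v v) = 0" if wS: "w \<in> S" and wv: "cin v w = 0" for w
  proof -
    have iS: "\<i> *s w \<in> S" using Ssub[OF wS wS, of "\<i>" 0] by simp
    have "cin v (\<i> *s w) = 0" using wv by (simp add: cin_scale_right)
    from perturb[OF iS this] have "Im (cin w (M *v v)) = 0" by (simp add: cin_scale_left)
    moreover have "Re (cin w (M *v v)) = 0" using perturb[OF wS wv] .
    ultimately show ?thesis by (simp add: complex_eq_iff)
  qed
  define l where "l = cin v (M *v v)"
  define w where "w = M *v v - l *s v"
  have "w = 1 *s (M *v v) + (- l) *s v" unfolding w_def by (simp add: vec_eq_iff)
  hence wS: "w \<in> S" using Ssub[OF Sinv[OF vS] vS, of 1 "- l"] by simp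
  have "cin v w = 0" unfolding w_def l_def by (simp add: cin_diff_right cin_scale_right cvv)
  hence cwv: "cin w v = 0" by (metis cin_cnj complex_cnj_zero)
  have "cin w w = cin w (M *v v - l *s v)" by (simp only: w_def)
  hence "cin w w = cin w (M *v v) - l * cin w v" by (simp only: cin_diff_right cin_scale_right)
  hence "cin w w = 0" using orth[OF wS \<open>cin v w = 0\<close>] cwv by simp
  hence Mv: "M *v v = l *s v" unfolding cin_self_eq0 w_def by simp
  have "cnj l = l" unfolding l_def by (rule herm_quad_real[OF herm])
  hence "l = complex_of_real (Re l)" by (simp add: complex_eq_iff)
  with Mv have "M *v v = complex_of_real (Re l) *s v" by simp
  thus ?thesis using vS nv by blast
qed

lemma cin_sum_right: "cin v (\<Sum>j\<in>A. f j) = (\<Sum>j\<in>A. cin v (f j))"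
  by (induct A rule: infinite_finite_induct) (simp_all add: cin_add_right)

lemma eig_family:
  fixes M :: "'n::finite op"
  assumes herm: "hermitian M"
  shows "k \<le> CARD('n) \<Longrightarrow> \<exists>u e. (\<forall>i<k. \<forall>j<k. cin (u i) (u j) = (if i = j then 1 else 0)) \<and>
            (\<forall>i<k. M *v u i = complex_of_real (e i) *s u i)"
proof (induction k)
  case 0 thus ?case by simp
next
  case (Suc k)
  then obtain u e where on: "\<forall>i<k. \<forall>j<k. cin (u i) (u j) = (if i = j then 1 else 0)"
    and ev: "\<forall>i<k. M *v u i = complex_of_real (e i) *s u i" by auto
  define S where "S = {w. \<forall>j\<in>{..<k}. cin (u j) w = 0}"
  have "\<exists>w0\<in>S. w0 \<noteq> 0"
  proof (rule ccontr)
    assume "\<not> ?thesis"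
    hence S0: "\<And>w. w \<in> S \<Longrightarrow> w = 0" by blast
    have "w \<in> vec.span (u ` {..<k})" for w :: "complex^'n"
    proof -
      define P where "P = (\<Sum>j<k. cin (u j) w *s u j)"
      have "w - P \<in> S"
      proof -
        have "cin (u i) (w - P) = 0" if i: "i < k" for i
        proof -
          have "cin (u i) P = (\<Sum>j<k. cin (u j) w * cin (u i) (u j))"
            unfolding P_def by (simp add: cin_sum_right cin_scale_right)
          also have "\<dots> = (\<Sum>j<k. if j = i then cin (u j) w else 0)"
            by (rule sum.cong) (use on i in auto)
          also have "\<dots> = cin (u i) w" using i by simp
          finally show ?thesis by (simp add: cin_diff_right)
        qed
        thus ?thesis unfolding S_def by auto
      qed
      hence "w = P" using S0 by (metis eq_iff_diff_eq_0)
      moreover have "P \<in> vec.span (u ` {..<k})"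
        unfolding P_def by (intro vec.span_sum vec.span_scale vec.span_base) auto
      ultimately show ?thesis by simp
    qed
    hence "UNIV \<subseteq> vec.span (u ` {..<k})" by auto
    hence "vec.dim (UNIV :: (complex^'n) set) \<le> card (u ` {..<k})"
      by (intro vec.dim_le_card) auto
    also have "\<dots> \<le> k" using card_image_le[of "{..<k}" u] by simp
    finally have "CARD('n) \<le> k" by (simp add: card_cart_basis)
    thus False using Suc.prems by simp
  qed
  then obtain w0 where w0: "w0 \<in> S" "w0 \<noteq> 0" by blast
  have evk: "\<And>j. j \<in> {..<k} \<Longrightarrow> M *v u j = complex_of_real (e j) *s u j" using ev by auto
  from max_eigvec[OF herm S_def evk w0] obtain v l where vS: "v \<in> S" and nv: "norm v = 1"
    and Mv: "M *v v = complex_of_real l *s v" by blast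
  define u' where "u' = u(k := v)"
  define e' where "e' = e(k := l)"
  have cvv: "cin v v = 1" using nv by (simp add: cin_self)
  have vu: "cin (u j) v = 0" if "j < k" for j using vS that unfolding S_def by auto
  hence uv: "cin v (u j) = 0" if "j < k" for j using that by (metis cin_cnj complex_cnj_zero)
  have "\<forall>i<Suc k. \<forall>j<Suc k. cin (u' i) (u' j) = (if i = j then 1 else 0)"
    unfolding u'_def using on vu uv cvv by (auto simp: less_Suc_eq)
  moreover have "\<forall>i<Suc k. M *v u' i = complex_of_real (e' i) *s u' i"
    unfolding u'_def e'_def using ev Mv by (auto simp: less_Suc_eq)
  ultimately show ?case by blast
qed

lemma spectral:
  fixes M :: "'n::finite op"
  assumes herm: "hermitian M"
  shows "\<exists>U d. unitary U \<and> M = U ** rdiag d ** adj U"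
proof -
  obtain u e where on: "\<forall>i<CARD('n). \<forall>j<CARD('n). cin (u i) (u j) = (if i = j then 1 else 0)"
    and ev: "\<forall>i<CARD('n). M *v u i = complex_of_real (e i) *s u i"
    using eig_family[OF herm, of "CARD('n)"] by auto
  obtain h where h: "bij_betw h {0..<CARD('n)} (UNIV::'n set)"
    using ex_bij_betw_nat_finite[of "UNIV :: 'n set"] by auto
  define \<sigma> where "\<sigma> = inv_into {0..<CARD('n)} h"
  have sb: "bij_betw \<sigma> UNIV {0..<CARD('n)}" unfolding \<sigma>_def by (rule bij_betw_inv_into[OF h])
  hence sl: "\<sigma> i < CARD('n)" for i by (auto simp: bij_betw_def)
  have si: "\<sigma> i = \<sigma> j \<longleftrightarrow> i = j" for i j using sb by (auto simp: bij_betw_def inj_on_def)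
  define U :: "'n op" where "U = (\<chi> r i. u (\<sigma> i) $ r)"
  define d where "d i = e (\<sigma> i)" for i
  have UU: "adj U ** U = mat 1"
  proof -
    have "(adj U ** U) $ i $ j = cin (u (\<sigma> i)) (u (\<sigma> j))" for i j
      by (simp add: adj_def U_def matrix_matrix_mult_def cin_def)
    thus ?thesis using on sl si by (simp add: vec_eq_iff mat_def)
  qed
  hence un: "unitary U" unfolding unitary_def using matrix_left_right_inverse by blast
  have MU: "M ** U = U ** rdiag d"
  proof -
    have "(M ** U) $ r $ i = (M *v u (\<sigma> i)) $ r" for r i
      by (simp add: U_def matrix_matrix_mult_def matrix_vector_mult_def)
    also have "\<dots> r i = (U ** rdiag d) $ r $ i" for r i
      using ev sl by (simp add: U_def d_def matrix_matrix_mult_def rdiag_def if_distrib cong: if_cong)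
    finally show ?thesis by (simp add: vec_eq_iff)
  qed
  have "M = M ** (U ** adj U)" using un unfolding unitary_def by simp
  also have "\<dots> = (M ** U) ** adj U" by (rule matrix_mul_assoc)
  also have "\<dots> = U ** rdiag d ** adj U" by (simp only: MU)
  finally have "M = U ** rdiag d ** adj U" .
  with un show ?thesis by (intro exI[of _ U] exI[of _ d] conjI)
qed

lemma mul_rdiag: "(A ** rdiag d) $ i $ j = A $ i $ j * complex_of_real (d j)"
  by (simp add: matrix_matrix_mult_def rdiag_def if_distrib cong: if_cong)
lemma rdiag_mul: "(rdiag d ** A) $ i $ j = complex_of_real (d i) * A $ i $ j"
proof -
  have "(rdiag d ** A)$i$j = (\<Sum>k\<in>UNIV. if i = k then complex_of_real (d i) * A$k$j else 0)"
    unfolding matrix_matrix_mult_def rdiag_def vec_lambda_beta by (rule sum.cong) auto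
  thus ?thesis by simp
qed

lemma adj_adj[simp]: "adj (adj A) = A" by (simp add: adj_def vec_eq_iff)
lemma adj_mul: "adj (A ** B) = adj B ** adj A"
  by (simp add: adj_def vec_eq_iff matrix_matrix_mult_def mult.commute)
lemma adj_rdiag[simp]: "adj (rdiag d) = rdiag d" by (simp add: adj_def vec_eq_iff rdiag_def)
lemma adj_mat1[simp]: "adj (mat 1 :: 'n::finite op) = mat 1" by (simp add: adj_def vec_eq_iff mat_def)
lemma adj_add: "adj (A + B) = adj A + adj B" by (simp add: adj_def vec_eq_iff)
lemma adj_scaleR: "adj (r *\<^sub>R A) = r *\<^sub>R adj A" by (simp add: adj_def vec_eq_iff scaleR_conv_of_real[where 'a=complex])
lemma adj_zero[simp]: "adj 0 = 0" by (simp add: adj_def vec_eq_iff)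

lemma diag_intertwine:
  assumes "W ** rdiag d = rdiag e ** W"
  shows "W ** rdiag (\<lambda>i. g (d i)) = rdiag (\<lambda>i. g (e i)) ** W"
proof -
  have "W $ i $ j * complex_of_real (g (d j)) = complex_of_real (g (e i)) * W $ i $ j" for i j
  proof (cases "W $ i $ j = 0")
    case False
    have "W $ i $ j * complex_of_real (d j) = complex_of_real (e i) * W $ i $ j"
      using assms by (metis mul_rdiag rdiag_mul)
    hence "d j = e i" using False by (simp add: mult.commute)
    thus ?thesis by (simp add: mult.commute)
  qed simp
  thus ?thesis by (simp add: vec_eq_iff mul_rdiag rdiag_mul)
qed

lemma decomp_unique:
  assumes U: "unitary U" and V: "unitary V"
  and eq: "U ** rdiag d ** adj U = V ** rdiag e ** adj V"
  shows "U ** rdiag (\<lambda>i. g (d i)) ** adj U = V ** rdiag (\<lambda>i. g (e i)) ** adj V"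
proof -
  have UU: "adj U ** U = mat 1" "U ** adj U = mat 1" using U unfolding unitary_def by auto
  have VV: "adj V ** V = mat 1" "V ** adj V = mat 1" using V unfolding unitary_def by auto
  define W where "W = adj V ** U"
  have "W ** rdiag d = adj V ** (U ** rdiag d ** adj U) ** U"
    unfolding W_def by (simp add: matrix_mul_assoc[symmetric] UU)
  also have "\<dots> = adj V ** (V ** rdiag e ** adj V) ** U" by (simp only: eq)
  also have "\<dots> = rdiag e ** W"
    unfolding W_def by (simp add: matrix_mul_assoc VV)
  finally have "W ** rdiag (\<lambda>i. g (d i)) = rdiag (\<lambda>i. g (e i)) ** W"
    by (rule diag_intertwine)
  hence X: "V ** (W ** rdiag (\<lambda>i. g (d i))) ** adj U = V ** (rdiag (\<lambda>i. g (e i)) ** W) ** adj U"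
    by simp
  have VW: "V ** W = U" unfolding W_def by (simp add: matrix_mul_assoc VV)
  have WU: "W ** adj U = adj V" unfolding W_def by (simp add: matrix_mul_assoc[symmetric] UU)
  have "U ** rdiag (\<lambda>i. g (d i)) ** adj U = V ** (W ** rdiag (\<lambda>i. g (d i))) ** adj U"
    by (simp only: matrix_mul_assoc VW)
  also have "\<dots> = V ** (rdiag (\<lambda>i. g (e i)) ** W) ** adj U" by (rule X)
  also have "\<dots> = V ** rdiag (\<lambda>i. g (e i)) ** (W ** adj U)" by (simp only: matrix_mul_assoc)
  finally show ?thesis by (simp only: WU)
qed

lemma mfun_eq:
  assumes U: "unitary U" and M: "M = U ** rdiag d ** adj U"
  shows "mfun f M = U ** rdiag (\<lambda>i. if d i = 0 then 0 else f (d i)) ** adj U"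
proof -
  let ?P = "\<lambda>N. \<exists>U d. unitary U \<and> M = U ** rdiag d ** adj U \<and>
       N = U ** rdiag (\<lambda>i. if d i = 0 then 0 else f (d i)) ** adj U"
  have "?P (U ** rdiag (\<lambda>i. if d i = 0 then 0 else f (d i)) ** adj U)" using U M by blast
  hence "?P (mfun f M)" unfolding mfun_def by (rule someI)
  then obtain V e where V: "unitary V" and M': "M = V ** rdiag e ** adj V"
    and N: "mfun f M = V ** rdiag (\<lambda>i. if e i = 0 then 0 else f (e i)) ** adj V" by blast
  show ?thesis unfolding N
    by (rule decomp_unique[OF V U, of e d "\<lambda>x. if x = 0 then 0 else f x"]) (use M M' in simp)
qed

lemma mfun_herm:
  assumes "hermitian M"
  shows "\<exists>U d. unitary U \<and> M = U ** rdiag d ** adj U \<and>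
     mfun f M = U ** rdiag (\<lambda>i. if d i = 0 then 0 else f (d i)) ** adj U"
  using spectral[OF assms] mfun_eq by blast

lemma mfun_cong: assumes "\<And>x. x \<noteq> 0 \<Longrightarrow> f x = g x" shows "mfun f M = mfun g M"
proof -
  have e: "(if x = 0 then 0 else f x) = (if x = 0 then 0 else g x)" for x
    using assms by auto
  show ?thesis unfolding mfun_def by (simp only: e)
qed

lemma rdiag_mult: "rdiag a ** rdiag b = rdiag (\<lambda>i. a i * b i)"
  by (simp add: vec_eq_iff mul_rdiag) (simp add: rdiag_def)

lemma mfun_decomp_ex: assumes "hermitian M"
  obtains U d where "unitary U" "M = U ** rdiag d ** adj U"
  using spectral[OF assms] by blast

lemma unitary_UU: "unitary U \<Longrightarrow> adj U ** U = mat 1" "unitary U \<Longrightarrow> U ** adj U = mat 1"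
  unfolding unitary_def by auto

lemma decomp_mult: assumes "unitary U"
  shows "(U ** rdiag a ** adj U) ** (U ** rdiag b ** adj U) = U ** rdiag (\<lambda>i. a i * b i) ** adj U"
proof -
  have "(U ** rdiag a ** adj U) ** (U ** rdiag b ** adj U) = U ** rdiag a ** (adj U ** U) ** rdiag b ** adj U"
    by (simp only: matrix_mul_assoc)
  also have "\<dots> = U ** (rdiag a ** rdiag b) ** adj U"
    using unitary_UU[OF assms] by (simp add: matrix_mul_assoc)
  finally show ?thesis by (simp only: rdiag_mult)
qed

lemma mfun_prod: assumes "hermitian M"
  shows "mfun f M ** mfun g M = mfun (\<lambda>x. f x * g x) M"
proof -
  obtain U d where U: "unitary U" and M: "M = U ** rdiag d ** adj U" by (rule mfun_decomp_ex[OF assms])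
  show ?thesis unfolding mfun_eq[OF U M] decomp_mult[OF U]
    by (rule arg_cong[where f="\<lambda>D. U ** rdiag D ** adj U"]) auto
qed

lemma mfun_id: assumes "hermitian M" shows "mfun (\<lambda>x. x) M = M"
proof -
  obtain U d where U: "unitary U" and M: "M = U ** rdiag d ** adj U" by (rule mfun_decomp_ex[OF assms])
  have "(\<lambda>i. if d i = 0 then 0 else d i) = d" by auto
  thus ?thesis unfolding mfun_eq[OF U M] using M by simp
qed

lemma herm_decomp: "hermitian (U ** rdiag d ** adj U)"
  unfolding hermitian_def by (simp add: adj_mul matrix_mul_assoc)

lemma mfun_hermitian: assumes "hermitian M" shows "hermitian (mfun f M)"
proof -
  obtain U d where U: "unitary U" and M: "M = U ** rdiag d ** adj U" by (rule mfun_decomp_ex[OF assms])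
  show ?thesis unfolding mfun_eq[OF U M] by (rule herm_decomp)
qed

lemma mfun_absorb: assumes "hermitian M" and "Q ** M = M" shows "Q ** mfun f M = mfun f M"
proof -
  have "mfun f M = mfun (\<lambda>x. x * (f x / x)) M" by (rule mfun_cong) simp
  also have "\<dots> = mfun (\<lambda>x. x) M ** mfun (\<lambda>x. f x / x) M" by (rule mfun_prod[OF assms(1), symmetric])
  also have "\<dots> = M ** mfun (\<lambda>x. f x / x) M" by (simp only: mfun_id[OF assms(1)])
  finally have e: "mfun f M = M ** mfun (\<lambda>x. f x / x) M" .
  show ?thesis unfolding e by (simp only: matrix_mul_assoc assms(2))
qed

lemma mfun_absorb_right: assumes "hermitian M" and "M ** Q = M" shows "mfun f M ** Q = mfun f M"
proof -
  have "mfun f M = mfun (\<lambda>x. (f x / x) * x) M" by (rule mfun_cong) simp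
  also have "\<dots> = mfun (\<lambda>x. f x / x) M ** mfun (\<lambda>x. x) M" by (rule mfun_prod[OF assms(1), symmetric])
  also have "\<dots> = mfun (\<lambda>x. f x / x) M ** M" by (simp only: mfun_id[OF assms(1)])
  finally have e: "mfun f M = mfun (\<lambda>x. f x / x) M ** M" .
  show ?thesis unfolding e by (simp only: matrix_mul_assoc[symmetric] assms(2))
qed

lemma cin_adj: "cin v (A *v w) = cin (adj A *v v) w"
proof -
  have "cin v (A *v w) = (\<Sum>i\<in>UNIV. \<Sum>j\<in>UNIV. cnj (v$i) * (A$i$j * w$j))"
    by (simp add: cin_def matrix_vector_mult_def sum_distrib_left)
  also have "\<dots> = (\<Sum>j\<in>UNIV. \<Sum>i\<in>UNIV. cnj (v$i) * (A$i$j * w$j))" by (rule sum.swap)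
  also have "\<dots> = cin (adj A *v v) w"
    unfolding cin_def matrix_vector_mult_def adj_def vec_lambda_beta cnj_sum sum_distrib_right
    by (intro sum.cong refl) (simp add: mult_ac)
  finally show ?thesis .
qed

lemma psd_cin: "psd M \<longleftrightarrow> hermitian M \<and> (\<forall>v. 0 \<le> Re (cin v (M *v v)))"
proof -
  have "(\<Sum>i\<in>UNIV. \<Sum>j\<in>UNIV. cnj (v $ i) * M $ i $ j * v $ j) = cin v (M *v v)" for v
    by (simp add: cin_def matrix_vector_mult_def sum_distrib_left mult_ac)
  thus ?thesis unfolding psd_def by simp
qed

lemma rdiag_mv: "(rdiag D *v y) $ i = complex_of_real (D i) * y $ i"
proof -
  have "(rdiag D *v y) $ i = (\<Sum>j\<in>UNIV. if i = j then complex_of_real (D i) * y $ j else 0)"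
    unfolding matrix_vector_mult_def rdiag_def vec_lambda_beta by (rule sum.cong) auto
  thus ?thesis by simp
qed

lemma cin_rdiag: "cin y (rdiag D *v y) = complex_of_real (\<Sum>i\<in>UNIV. D i * (cmod (y$i))^2)"
proof -
  have "cin y (rdiag D *v y) = (\<Sum>i\<in>UNIV. complex_of_real (D i * (cmod (y$i))^2))"
    unfolding cin_def rdiag_mv
  proof (rule sum.cong[OF refl])
    fix i
    have "complex_of_real (D i * (cmod (y$i))^2) = complex_of_real (D i) * (y$i * cnj (y$i))"
      by (simp only: of_real_mult complex_norm_square)
    thus "cnj (y $ i) * (complex_of_real (D i) * y $ i) = complex_of_real (D i * (cmod (y $ i))\<^sup>2)"
      by (simp only: mult_ac)
  qed
  thus ?thesis by (simp only: of_real_sum)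
qed

lemma cin_decomp: "cin v ((U ** rdiag D ** adj U) *v v) =
   complex_of_real (\<Sum>i\<in>UNIV. D i * (cmod ((adj U *v v)$i))^2)"
proof -
  have "cin v ((U ** rdiag D ** adj U) *v v) = cin v (U *v (rdiag D *v (adj U *v v)))"
    by (simp only: matrix_vector_mul_assoc matrix_mul_assoc)
  also have "\<dots> = cin (adj U *v v) (rdiag D *v (adj U *v v))" by (rule cin_adj)
  finally show ?thesis by (simp only: cin_rdiag)
qed

lemma psd_decomp: assumes "\<And>i. D i \<ge> 0" shows "psd (U ** rdiag D ** adj U)"
  unfolding psd_cin
proof (intro conjI allI herm_decomp)
  fix v
  have "0 \<le> (\<Sum>i\<in>UNIV. D i * (cmod ((adj U *v v)$i))^2)"
    by (intro sum_nonneg mult_nonneg_nonneg assms zero_le_power2)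
  thus "0 \<le> Re (cin v ((U ** rdiag D ** adj U) *v v))" by (simp only: cin_decomp Re_complex_of_real)
qed

lemma mfun_psd: assumes "hermitian M" "\<And>x. f x \<ge> 0" shows "psd (mfun f M)"
proof -
  obtain U d where U: "unitary U" and M: "M = U ** rdiag d ** adj U" by (rule mfun_decomp_ex[OF assms(1)])
  show ?thesis unfolding mfun_eq[OF U M] by (rule psd_decomp) (simp add: assms(2))
qed

lemma axis_cin_decomp: assumes U: "unitary U"
  shows "Re (cin (U *v axis i 1) ((U ** rdiag D ** adj U) *v (U *v axis i 1))) = D i"
proof -
  have "adj U *v (U *v axis i 1) = axis i 1"
    by (simp only: matrix_vector_mul_assoc unitary_UU[OF U] matrix_vector_mul_lid)
  hence "Re (cin (U *v axis i 1) ((U ** rdiag D ** adj U) *v (U *v axis i 1)))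
      = (\<Sum>k\<in>UNIV. D k * (cmod ((axis i 1 :: complex^'a) $ k))^2)"
    by (simp only: cin_decomp Re_complex_of_real)
  also have "\<dots> = (\<Sum>k\<in>UNIV. if k = i then D i else 0)"
    by (rule sum.cong) (auto simp: axis_def)
  finally show ?thesis by simp
qed

lemma psd_decomp_nonneg: assumes "psd M" "unitary U" "M = U ** rdiag D ** adj U"
  shows "D i \<ge> 0"
proof -
  have "0 \<le> Re (cin (U *v axis i 1) (M *v (U *v axis i 1)))" using assms(1) unfolding psd_cin by blast
  thus ?thesis unfolding assms(3) axis_cin_decomp[OF assms(2)] .
qed

lemma psd_null: assumes "psd M" and w: "Re (cin w (M *v w)) = 0" shows "M *v w = 0"
proof -
  have h: "hermitian M" using assms(1) unfolding psd_cin by blast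
  obtain U D where U: "unitary U" and M: "M = U ** rdiag D ** adj U" by (rule mfun_decomp_ex[OF h])
  have D0: "D i \<ge> 0" for i by (rule psd_decomp_nonneg[OF assms(1) U M])
  define y where "y = adj U *v w"
  have "(\<Sum>k\<in>UNIV. D k * (cmod (y $ k))^2) = 0"
    using w unfolding M y_def by (simp only: cin_decomp Re_complex_of_real)
  hence "\<forall>k\<in>UNIV. D k * (cmod (y $ k))^2 = 0"
    by (subst (asm) sum_nonneg_eq_0_iff) (auto intro: mult_nonneg_nonneg D0)
  hence "rdiag D *v y = 0" by (simp add: vec_eq_iff rdiag_mv)
  hence "U *v (rdiag D *v y) = 0" by simp
  thus ?thesis unfolding M y_def by (simp only: matrix_vector_mul_assoc matrix_mul_assoc)
qed

lemma mtrace_col: assumes "hermitian X"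
  shows "mtrace (X ** N ** X) = (\<Sum>j\<in>UNIV. cin (\<chi> r. X $ r $ j) (N *v (\<chi> r. X $ r $ j)))"
proof -
  have Xc: "X $ j $ r = cnj (X $ r $ j)" for j r
    using assms unfolding hermitian_def adj_def by (metis vec_lambda_beta)
  have Xc': "cnj (X $ r $ j) = X $ j $ r" for j r using Xc[of j r] by simp
  have "(X ** N ** X) $ j $ j = cin (\<chi> r. X $ r $ j) (N *v (\<chi> r. X $ r $ j))" for j
  proof -
    have "(X ** N ** X) $ j $ j = (\<Sum>r\<in>UNIV. X $ j $ r * (\<Sum>s\<in>UNIV. N $ r $ s * X $ s $ j))"
      unfolding matrix_mul_assoc[symmetric] by (simp add: matrix_matrix_mult_def)
    also have "\<dots> = cin (\<chi> r. X $ r $ j) (N *v (\<chi> r. X $ r $ j))"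
      unfolding cin_def matrix_vector_mult_def vec_lambda_beta
      by (rule sum.cong[OF refl]) (simp only: Xc' vec_lambda_beta)
    finally show ?thesis .
  qed
  thus ?thesis unfolding mtrace_def by simp
qed

lemma psd_trace_zero: assumes N: "psd N" and X: "hermitian X" and tr: "Re (mtrace (X ** N ** X)) = 0"
  shows "N ** X = 0"
proof -
  define c where "c j = (\<chi> r. X $ r $ j)" for j
  have nn: "0 \<le> Re (cin (c j) (N *v c j))" for j using N unfolding psd_cin by blast
  have "(\<Sum>j\<in>UNIV. Re (cin (c j) (N *v c j))) = 0"
    using tr unfolding mtrace_col[OF X] c_def by (simp add: Re_sum)
  hence "\<forall>j\<in>UNIV. Re (cin (c j) (N *v c j)) = 0" using nn by (subst (asm) sum_nonneg_eq_0_iff) auto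
  hence z: "N *v c j = 0" for j using psd_null[OF N] by blast
  have "(N ** X) $ r $ j = (N *v c j) $ r" for r j
    by (simp add: c_def matrix_matrix_mult_def matrix_vector_mult_def)
  thus ?thesis using z by (simp add: vec_eq_iff)
qed

lemma mtrace_comm: "mtrace (A ** B) = mtrace (B ** (A :: 'n::finite op))"
  unfolding mtrace_def matrix_matrix_mult_def vec_lambda_beta by (subst sum.swap) (simp add: mult.commute)

lemma mtrace_decomp: assumes "unitary U"
  shows "mtrace (U ** rdiag d ** adj U) = complex_of_real (\<Sum>i\<in>UNIV. d i)"
proof -
  have "mtrace (U ** rdiag d ** adj U) = mtrace (adj U ** (U ** rdiag d))"
    by (rule mtrace_comm)
  also have "\<dots> = mtrace (rdiag d)" by (simp only: matrix_mul_assoc unitary_UU[OF assms] matrix_mul_lid)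
  finally show ?thesis by (simp add: mtrace_def rdiag_def)
qed

lemma mm_diff_left: "(A - B) ** C = A ** C - B ** (C :: 'n::finite op)"
  by (simp add: vec_eq_iff matrix_matrix_mult_def sum_subtractf left_diff_distrib)
lemma mm_diff_right: "C ** (A - B) = C ** A - C ** (B :: 'n::finite op)"
  by (simp add: vec_eq_iff matrix_matrix_mult_def sum_subtractf right_diff_distrib)
lemma adj_diff: "adj (A - B) = adj A - adj B" by (simp add: adj_def vec_eq_iff)
lemma mtrace_zero[simp]: "mtrace 0 = 0" by (simp add: mtrace_def)

lemma support_gen:
  fixes E :: "'k::finite op \<Rightarrow> 'n::finite op"
  assumes psd: "psd \<rho>" and hR: "hermitian R"
    and E1: "E (mat 1) = mat 1" and Ediff: "\<And>A B. E (A - B) = E A - E B"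
    and Eadj: "\<And>A. adj (E A) = E (adj A)" and Emul: "\<And>A B. E A ** E B = E (A ** B)"
    and tr: "\<And>A. mtrace (E A ** \<rho>) = mtrace (A ** R)"
  shows "E (mfun (\<lambda>_. 1) R) ** \<rho> = \<rho>"
proof -
  define Pr where "Pr = mfun (\<lambda>_. 1) R"
  have hP: "hermitian Pr" unfolding Pr_def by (rule mfun_hermitian[OF hR])
  have PP: "Pr ** Pr = Pr" unfolding Pr_def mfun_prod[OF hR] by simp
  have RP: "R ** Pr = R"
  proof -
    have "R ** Pr = mfun (\<lambda>x. x) R ** mfun (\<lambda>_. 1) R" by (simp only: mfun_id[OF hR] Pr_def)
    also have "\<dots> = mfun (\<lambda>x. x) R" unfolding mfun_prod[OF hR] by simp
    finally show ?thesis by (simp only: mfun_id[OF hR])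
  qed
  define P where "P = mat 1 - Pr"
  have hPP: "adj P = P" unfolding P_def adj_diff using hP unfolding hermitian_def by simp
  have RPz: "R ** P = 0" unfolding P_def mm_diff_right RP by simp
  have PPP: "P ** P = P" unfolding P_def mm_diff_left mm_diff_right PP by simp
  define Z where "Z = E P"
  have hZ: "hermitian Z" unfolding hermitian_def Z_def Eadj hPP ..
  have ZZ: "Z ** Z = Z" unfolding Z_def Emul PPP ..
  have "mtrace (Z ** \<rho> ** Z) = mtrace (Z ** (Z ** \<rho>))" by (rule mtrace_comm)
  also have "\<dots> = mtrace (Z ** \<rho>)" by (simp only: matrix_mul_assoc ZZ)
  also have "\<dots> = mtrace (P ** R)" unfolding Z_def by (rule tr)
  also have "\<dots> = mtrace (R ** P)" by (rule mtrace_comm)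
  finally have "mtrace (Z ** \<rho> ** Z) = 0" unfolding RPz by simp
  hence "\<rho> ** Z = 0" using psd_trace_zero[OF psd hZ] by simp
  hence "adj (\<rho> ** Z) = 0" by simp
  hence Zr: "Z ** \<rho> = 0" unfolding adj_mul using hZ psd unfolding hermitian_def psd_def by simp
  have "E Pr = mat 1 - Z" unfolding Z_def P_def Ediff E1 by simp
  hence "E Pr ** \<rho> = \<rho> - Z ** \<rho>" by (simp add: mm_diff_left)
  thus ?thesis unfolding Zr Pr_def by simp
qed

lemma sum_univ_prod: "(\<Sum>p\<in>UNIV. f p) = (\<Sum>a\<in>UNIV. \<Sum>b\<in>UNIV. f (a, b))"
  by (simp add: sum.cartesian_product UNIV_Times_UNIV[symmetric] del: UNIV_Times_UNIV)

lemma sum_univ_prod3: "(\<Sum>p\<in>UNIV. f p) = (\<Sum>b\<in>UNIV. \<Sum>a\<in>UNIV. \<Sum>e\<in>UNIV. f (a, b, e))"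
  unfolding sum_univ_prod[of f] sum_univ_prod[of "\<lambda>q. f (_, q)"] by (rule sum.swap)

lemma extB_entry: "extB P $ (a,b,e) $ (a',b',e') = (if b = b' then P $ (a,e) $ (a',e') else 0)"
  by (simp add: extB_def)

lemma extB_mul: "extB P ** extB Q = (extB (P ** Q) :: ('a::finite \<times> 'b::finite \<times> 'e::finite) op)"
  unfolding vec_eq_iff
proof (intro allI)
  fix i j :: "'a \<times> 'b \<times> 'e"
  obtain a b e where i: "i = (a,b,e)" by (cases i) auto
  obtain a' b' e' where j: "j = (a',b',e')" by (cases j) auto
  have "(extB P ** extB Q) $ i $ j = (\<Sum>y\<in>UNIV. \<Sum>x\<in>UNIV. \<Sum>z\<in>UNIV.
      extB P $ (a,b,e) $ (x,y,z) * extB Q $ (x,y,z) $ (a',b',e'))"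
    unfolding i j matrix_matrix_mult_def vec_lambda_beta by (rule sum_univ_prod3)
  also have "\<dots> = (\<Sum>y\<in>UNIV. if y = b then (if b = b' then \<Sum>x\<in>UNIV. \<Sum>z\<in>UNIV.
      P $ (a,e) $ (x,z) * Q $ (x,z) $ (a',e') else 0) else 0)"
    by (rule sum.cong) (auto simp: extB_entry)
  also have "\<dots> = extB (P ** Q) $ i $ j"
    by (simp add: i j extB_entry matrix_matrix_mult_def sum_univ_prod[where f="\<lambda>k. P $ (a,e) $ k * Q $ k $ (a',e')"])
  finally show "(extB P ** extB Q) $ i $ j = extB (P ** Q) $ i $ j" .
qed

definition idA :: "'e::finite op \<Rightarrow> ('a::finite \<times> 'e) op" where
  "idA P = (\<chi> i j. case (i, j) of ((a,e), (a',e')) \<Rightarrow> if a = a' then P $ e $ e' else 0)"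

lemma vec_eq3: assumes "\<And>a b e a' b' e'. A $ (a,b,e) $ (a',b',e') = B $ (a,b,e) $ (a',b',e')"
  shows "A = B"
  using assms by (simp add: vec_eq_iff split_paired_all)
lemma vec_eq2: assumes "\<And>a e a' e'. A $ (a,e) $ (a',e') = B $ (a,e) $ (a',e')"
  shows "A = B"
  using assms by (simp add: vec_eq_iff split_paired_all)

lemma ptrB_entry: "ptrB M $ (a,e) $ (a',e') = (\<Sum>b\<in>UNIV. M $ (a,b,e) $ (a',b,e'))"
  by (simp add: ptrB_def)
lemma ptrA_entry: "ptrA M $ e $ e' = (\<Sum>a\<in>UNIV. M $ (a,e) $ (a,e'))"
  by (simp add: ptrA_def)
lemma ptrA_ABE_entry: "ptrA_ABE M $ (b,e) $ (b',e') = (\<Sum>a\<in>UNIV. M $ (a,b,e) $ (a,b',e'))"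
  by (simp add: ptrA_ABE_def)
lemma extB'_entry: "extB' P $ (b,e) $ (b',e') = (if b = b' then P $ e $ e' else 0)"
  by (simp add: extB'_def)
lemma idA_entry: "idA P $ (a,e) $ (a',e') = (if a = a' then P $ e $ e' else 0)"
  by (simp add: idA_def)

lemma extB_mul_entry: "(extB A ** M) $ (a,b,e) $ j = (\<Sum>x\<in>UNIV. \<Sum>z\<in>UNIV. A $ (a,e) $ (x,z) * M $ (x,b,z) $ j)"
proof -
  have "(extB A ** M) $ (a,b,e) $ j = (\<Sum>y\<in>UNIV. \<Sum>x\<in>UNIV. \<Sum>z\<in>UNIV.
      extB A $ (a,b,e) $ (x,y,z) * M $ (x,y,z) $ j)"
    unfolding matrix_matrix_mult_def vec_lambda_beta by (rule sum_univ_prod3)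
  also have "\<dots> = (\<Sum>y\<in>UNIV. if y = b then \<Sum>x\<in>UNIV. \<Sum>z\<in>UNIV. A $ (a,e) $ (x,z) * M $ (x,b,z) $ j else 0)"
    by (rule sum.cong) (auto simp: extB_entry)
  finally show ?thesis by simp
qed

lemma mul_extB_entry: "(M ** extB A) $ i $ (a',b',e') = (\<Sum>x\<in>UNIV. \<Sum>z\<in>UNIV. M $ i $ (x,b',z) * A $ (x,z) $ (a',e'))"
proof -
  have "(M ** extB A) $ i $ (a',b',e') = (\<Sum>y\<in>UNIV. \<Sum>x\<in>UNIV. \<Sum>z\<in>UNIV.
      M $ i $ (x,y,z) * extB A $ (x,y,z) $ (a',b',e'))"
    unfolding matrix_matrix_mult_def vec_lambda_beta by (rule sum_univ_prod3)
  also have "\<dots> = (\<Sum>y\<in>UNIV. if y = b' then \<Sum>x\<in>UNIV. \<Sum>z\<in>UNIV. M $ i $ (x,b',z) * A $ (x,z) $ (a',e') else 0)"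
    by (rule sum.cong) (auto simp: extB_entry)
  finally show ?thesis by simp
qed

lemma idA_mul_entry: "(idA A ** M) $ (a,e) $ j = (\<Sum>z\<in>UNIV. A $ e $ z * M $ (a,z) $ j)"
proof -
  have "(idA A ** M) $ (a,e) $ j = (\<Sum>x\<in>UNIV. \<Sum>z\<in>UNIV. idA A $ (a,e) $ (x,z) * M $ (x,z) $ j)"
    unfolding matrix_matrix_mult_def vec_lambda_beta by (rule sum_univ_prod)
  also have "\<dots> = (\<Sum>x\<in>UNIV. if x = a then \<Sum>z\<in>UNIV. A $ e $ z * M $ (a,z) $ j else 0)"
    by (rule sum.cong) (auto simp: idA_entry)
  finally show ?thesis by simp
qed

lemma mul_idA_entry: "(M ** idA A) $ i $ (a',e') = (\<Sum>z\<in>UNIV. M $ i $ (a',z) * A $ z $ e')"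
proof -
  have "(M ** idA A) $ i $ (a',e') = (\<Sum>x\<in>UNIV. \<Sum>z\<in>UNIV. M $ i $ (x,z) * idA A $ (x,z) $ (a',e'))"
    unfolding matrix_matrix_mult_def vec_lambda_beta by (rule sum_univ_prod)
  also have "\<dots> = (\<Sum>x\<in>UNIV. if x = a' then \<Sum>z\<in>UNIV. M $ i $ (a',z) * A $ z $ e' else 0)"
    by (rule sum.cong) (auto simp: idA_entry)
  finally show ?thesis by simp
qed

lemma extB'_mul_entry: "(extB' A ** M) $ (b,e) $ j = (\<Sum>z\<in>UNIV. A $ e $ z * M $ (b,z) $ j)"
proof -
  have "(extB' A ** M) $ (b,e) $ j = (\<Sum>x\<in>UNIV. \<Sum>z\<in>UNIV. extB' A $ (b,e) $ (x,z) * M $ (x,z) $ j)"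
    unfolding matrix_matrix_mult_def vec_lambda_beta by (rule sum_univ_prod)
  also have "\<dots> = (\<Sum>x\<in>UNIV. if x = b then \<Sum>z\<in>UNIV. A $ e $ z * M $ (b,z) $ j else 0)"
    by (rule sum.cong) (auto simp: extB'_entry)
  finally show ?thesis by simp
qed

lemma mul_extB'_entry: "(M ** extB' A) $ i $ (b',e') = (\<Sum>z\<in>UNIV. M $ i $ (b',z) * A $ z $ e')"
proof -
  have "(M ** extB' A) $ i $ (b',e') = (\<Sum>x\<in>UNIV. \<Sum>z\<in>UNIV. M $ i $ (x,z) * extB' A $ (x,z) $ (b',e'))"
    unfolding matrix_matrix_mult_def vec_lambda_beta by (rule sum_univ_prod)
  also have "\<dots> = (\<Sum>x\<in>UNIV. if x = b' then \<Sum>z\<in>UNIV. M $ i $ (b',z) * A $ z $ e' else 0)"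
    by (rule sum.cong) (auto simp: extB'_entry)
  finally show ?thesis by simp
qed

lemma sw3: "(\<Sum>a\<in>A. \<Sum>e\<in>E. \<Sum>b\<in>B. G a e b) = (\<Sum>b\<in>B. \<Sum>a\<in>A. \<Sum>e\<in>E. (G a e b :: 'z::comm_monoid_add))"
proof -
  have "(\<Sum>a\<in>A. \<Sum>e\<in>E. \<Sum>b\<in>B. G a e b) = (\<Sum>a\<in>A. \<Sum>b\<in>B. \<Sum>e\<in>E. G a e b)"
    by (rule sum.cong[OF refl]) (rule sum.swap)
  also have "\<dots> = (\<Sum>b\<in>B. \<Sum>a\<in>A. \<Sum>e\<in>E. G a e b)" by (rule sum.swap)
  finally show ?thesis .
qed

lemma mm_entry2: "(P ** Q) $ (a,e) $ j = (\<Sum>x\<in>UNIV. \<Sum>z\<in>UNIV. P $ (a,e) $ (x,z) * Q $ (x,z) $ j)"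
  unfolding matrix_matrix_mult_def vec_lambda_beta by (rule sum_univ_prod)

lemma extB_one: "extB (mat 1) = (mat 1 :: ('a::finite \<times> 'b::finite \<times> 'e::finite) op)"
  by (rule vec_eq3) (auto simp: extB_entry mat_def)
lemma extB_diff: "extB (A - B) = extB A - (extB B :: ('a::finite \<times> 'b::finite \<times> 'e::finite) op)"
  by (rule vec_eq3) (auto simp: extB_entry)
lemma extB_adj: "adj (extB A) = (extB (adj A) :: ('a::finite \<times> 'b::finite \<times> 'e::finite) op)"
  by (rule vec_eq3) (auto simp: extB_entry adj_def)
lemma extB_scale: "extB (r *\<^sub>R A) = r *\<^sub>R (extB A :: ('a::finite \<times> 'b::finite \<times> 'e::finite) op)"
  by (rule vec_eq3) (auto simp: extB_entry)

lemma idA_one: "idA (mat 1) = (mat 1 :: ('a::finite \<times> 'e::finite) op)"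
  by (rule vec_eq2) (auto simp: idA_entry mat_def)
lemma idA_adj: "adj (idA A) = (idA (adj A) :: ('a::finite \<times> 'e::finite) op)"
  by (rule vec_eq2) (auto simp: idA_entry adj_def)
lemma idA_diff: "idA (A - B) = idA A - (idA B :: ('a::finite \<times> 'e::finite) op)"
  by (rule vec_eq2) (auto simp: idA_entry)
lemma idA_mul: "idA A ** idA B = (idA (A ** B) :: ('a::finite \<times> 'e::finite) op)"
  by (rule vec_eq2) (unfold idA_mul_entry, auto simp: idA_entry matrix_matrix_mult_def)

lemma extB'_adj: "adj (extB' A) = (extB' (adj A) :: ('b::finite \<times> 'e::finite) op)"
  by (rule vec_eq2) (auto simp: extB'_entry adj_def)
lemma extB'_scale: "extB' (r *\<^sub>R A) = r *\<^sub>R (extB' A :: ('b::finite \<times> 'e::finite) op)"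
  by (rule vec_eq2) (auto simp: extB'_entry)
lemma extB'_mul: "extB' A ** extB' B = (extB' (A ** B) :: ('b::finite \<times> 'e::finite) op)"
  by (rule vec_eq2) (unfold extB'_mul_entry, auto simp: extB'_entry matrix_matrix_mult_def)

lemma ptrB_adj: "adj (ptrB M) = ptrB (adj (M :: ('a::finite \<times> 'b::finite \<times> 'e::finite) op))"
  by (rule vec_eq2) (simp add: ptrB_entry adj_def)
lemma ptrB_scale: "ptrB (r *\<^sub>R M) = r *\<^sub>R ptrB (M :: ('a::finite \<times> 'b::finite \<times> 'e::finite) op)"
  by (rule vec_eq2) (simp add: ptrB_entry scaleR_sum_right)
lemma ptrA_adj: "adj (ptrA M) = ptrA (adj (M :: ('a::finite \<times> 'e::finite) op))"
  by (simp add: vec_eq_iff ptrA_entry adj_def)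
lemma ptrA_scale: "ptrA (r *\<^sub>R M) = r *\<^sub>R ptrA (M :: ('a::finite \<times> 'e::finite) op)"
  by (simp add: vec_eq_iff ptrA_entry scaleR_sum_right)
lemma ptrA_ABE_adj: "adj (ptrA_ABE M) = ptrA_ABE (adj (M :: ('a::finite \<times> 'b::finite \<times> 'e::finite) op))"
  by (rule vec_eq2) (simp add: ptrA_ABE_entry adj_def)
lemma ptrA_ABE_scale: "ptrA_ABE (r *\<^sub>R M) = r *\<^sub>R ptrA_ABE (M :: ('a::finite \<times> 'b::finite \<times> 'e::finite) op)"
  by (rule vec_eq2) (simp add: ptrA_ABE_entry scaleR_sum_right)

lemma mtrace_ptrA_ABE: "mtrace (ptrA_ABE M) = mtrace (M :: ('a::finite \<times> 'b::finite \<times> 'e::finite) op)"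
proof -
  have "mtrace (ptrA_ABE M) = (\<Sum>b\<in>UNIV. \<Sum>e\<in>UNIV. \<Sum>a\<in>UNIV. M $ (a,b,e) $ (a,b,e))"
    unfolding mtrace_def sum_univ_prod[where f="\<lambda>k. ptrA_ABE M $ k $ k"] ptrA_ABE_entry ..
  also have "\<dots> = (\<Sum>a\<in>UNIV. \<Sum>b\<in>UNIV. \<Sum>e\<in>UNIV. M $ (a,b,e) $ (a,b,e))" by (rule sw3)
  also have "\<dots> = mtrace M" unfolding mtrace_def sum_univ_prod[where f="\<lambda>k. M $ k $ k"]
    by (simp add: sum_univ_prod)
  finally show ?thesis .
qed

lemma extB_trace: "mtrace (extB A ** M) = mtrace (A ** ptrB (M :: ('a::finite \<times> 'b::finite \<times> 'e::finite) op))"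
proof -
  have "mtrace (extB A ** M) = (\<Sum>b\<in>UNIV. \<Sum>a\<in>UNIV. \<Sum>e\<in>UNIV. \<Sum>x\<in>UNIV. \<Sum>z\<in>UNIV.
          A $ (a,e) $ (x,z) * M $ (x,b,z) $ (a,b,e))"
    unfolding mtrace_def sum_univ_prod3[where f="\<lambda>k. (extB A ** M) $ k $ k"] extB_mul_entry ..
  also have "\<dots> = (\<Sum>a\<in>UNIV. \<Sum>e\<in>UNIV. \<Sum>b\<in>UNIV. \<Sum>x\<in>UNIV. \<Sum>z\<in>UNIV.
          A $ (a,e) $ (x,z) * M $ (x,b,z) $ (a,b,e))" by (rule sw3[symmetric])
  also have "\<dots> = (\<Sum>a\<in>UNIV. \<Sum>e\<in>UNIV. \<Sum>x\<in>UNIV. \<Sum>z\<in>UNIV. \<Sum>b\<in>UNIV.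
          A $ (a,e) $ (x,z) * M $ (x,b,z) $ (a,b,e))"
    by (intro sum.cong refl) (rule sw3[symmetric])
  also have "\<dots> = mtrace (A ** ptrB M)"
    unfolding mtrace_def sum_univ_prod[where f="\<lambda>k. (A ** ptrB M) $ k $ k"] mm_entry2 ptrB_entry
    by (simp add: sum_distrib_left)
  finally show ?thesis .
qed

lemma ptrB_extB_mul: "ptrB (extB Q ** M) = Q ** ptrB (M :: ('a::finite \<times> 'b::finite \<times> 'e::finite) op)"
proof (rule vec_eq2)
  fix a e a' e'
  have "ptrB (extB Q ** M) $ (a,e) $ (a',e') = (\<Sum>b\<in>UNIV. \<Sum>x\<in>UNIV. \<Sum>z\<in>UNIV.
      Q $ (a,e) $ (x,z) * M $ (x,b,z) $ (a',b,e'))"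
    unfolding ptrB_entry extB_mul_entry ..
  also have "\<dots> = (\<Sum>x\<in>UNIV. \<Sum>z\<in>UNIV. \<Sum>b\<in>UNIV. Q $ (a,e) $ (x,z) * M $ (x,b,z) $ (a',b,e'))"
    by (rule sw3[symmetric])
  also have "\<dots> = (Q ** ptrB M) $ (a,e) $ (a',e')"
    unfolding mm_entry2 ptrB_entry by (simp add: sum_distrib_left)
  finally show "ptrB (extB Q ** M) $ (a,e) $ (a',e') = (Q ** ptrB M) $ (a,e) $ (a',e')" .
qed

lemma idA_trace: "mtrace (idA A ** M) = mtrace (A ** ptrA (M :: ('a::finite \<times> 'e::finite) op))"
proof -
  have "mtrace (idA A ** M) = (\<Sum>a\<in>UNIV. \<Sum>e\<in>UNIV. \<Sum>z\<in>UNIV. A $ e $ z * M $ (a,z) $ (a,e))"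
    unfolding mtrace_def sum_univ_prod[where f="\<lambda>k. (idA A ** M) $ k $ k"] idA_mul_entry ..
  also have "\<dots> = (\<Sum>e\<in>UNIV. \<Sum>z\<in>UNIV. \<Sum>a\<in>UNIV. A $ e $ z * M $ (a,z) $ (a,e))"
    by (rule sw3[symmetric])
  also have "\<dots> = mtrace (A ** ptrA M)"
    unfolding mtrace_def matrix_matrix_mult_def ptrA_entry by (simp add: sum_distrib_left)
  finally show ?thesis .
qed

lemma link_left: "extB' P ** ptrA_ABE N = ptrA_ABE (extB (idA P) ** (N :: ('a::finite \<times> 'b::finite \<times> 'e::finite) op))"
proof (rule vec_eq2)
  fix b e b' e'
  have "(extB' P ** ptrA_ABE N) $ (b,e) $ (b',e') = (\<Sum>z\<in>UNIV. \<Sum>a\<in>UNIV. P $ e $ z * N $ (a,b,z) $ (a,b',e'))"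
    unfolding extB'_mul_entry ptrA_ABE_entry by (simp add: sum_distrib_left)
  also have "\<dots> = (\<Sum>a\<in>UNIV. \<Sum>z\<in>UNIV. P $ e $ z * N $ (a,b,z) $ (a,b',e'))" by (rule sum.swap)
  also have "\<dots> = ptrA_ABE (extB (idA P) ** N) $ (b,e) $ (b',e')"
    unfolding ptrA_ABE_entry extB_mul_entry
  proof (rule sum.cong[OF refl])
    fix a
    have "(\<Sum>x\<in>UNIV. \<Sum>z\<in>UNIV. idA P $ (a, e) $ (x, z) * N $ (x, b, z) $ (a, b', e'))
        = (\<Sum>x\<in>UNIV. if x = a then (\<Sum>z\<in>UNIV. P $ e $ z * N $ (a, b, z) $ (a, b', e')) else 0)"
      by (rule sum.cong) (auto simp: idA_entry)
    thus "(\<Sum>z\<in>UNIV. P $ e $ z * N $ (a, b, z) $ (a, b', e')) =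
        (\<Sum>x\<in>UNIV. \<Sum>z\<in>UNIV. idA P $ (a, e) $ (x, z) * N $ (x, b, z) $ (a, b', e'))" by simp
  qed
  finally show "(extB' P ** ptrA_ABE N) $ (b,e) $ (b',e') = ptrA_ABE (extB (idA P) ** N) $ (b,e) $ (b',e')" .
qed

lemma link_right: "ptrA_ABE N ** extB' P = ptrA_ABE (N ** extB (idA P) :: ('a::finite \<times> 'b::finite \<times> 'e::finite) op)"
proof (rule vec_eq2)
  fix b e b' e'
  have "(ptrA_ABE N ** extB' P) $ (b,e) $ (b',e') = (\<Sum>z\<in>UNIV. \<Sum>a\<in>UNIV. N $ (a,b,e) $ (a,b',z) * P $ z $ e')"
    unfolding mul_extB'_entry ptrA_ABE_entry by (simp add: sum_distrib_right)
  also have "\<dots> = (\<Sum>a\<in>UNIV. \<Sum>z\<in>UNIV. N $ (a,b,e) $ (a,b',z) * P $ z $ e')" by (rule sum.swap)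
  also have "\<dots> = ptrA_ABE (N ** extB (idA P)) $ (b,e) $ (b',e')"
    unfolding ptrA_ABE_entry mul_extB_entry
  proof (rule sum.cong[OF refl])
    fix a
    have "(\<Sum>x\<in>UNIV. \<Sum>z\<in>UNIV. N $ (a,b,e) $ (x,b',z) * idA P $ (x, z) $ (a, e'))
        = (\<Sum>x\<in>UNIV. if x = a then (\<Sum>z\<in>UNIV. N $ (a,b,e) $ (a,b',z) * P $ z $ e') else 0)"
      by (rule sum.cong) (auto simp: idA_entry)
    thus "(\<Sum>z\<in>UNIV. N $ (a,b,e) $ (a,b',z) * P $ z $ e') =
        (\<Sum>x\<in>UNIV. \<Sum>z\<in>UNIV. N $ (a,b,e) $ (x,b',z) * idA P $ (x, z) $ (a, e'))" by simp
  qed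
  finally show "(ptrA_ABE N ** extB' P) $ (b,e) $ (b',e') = ptrA_ABE (N ** extB (idA P)) $ (b,e) $ (b',e')" .
qed

lemma qstate_psd: "qstate \<rho> \<Longrightarrow> psd \<rho>" unfolding qstate_def by simp
lemma psd_herm: "psd \<rho> \<Longrightarrow> hermitian \<rho>" unfolding psd_def by simp

lemma herm_ptrB: "hermitian M \<Longrightarrow> hermitian (ptrB M)" unfolding hermitian_def by (simp add: ptrB_adj)
lemma herm_ptrA: "hermitian M \<Longrightarrow> hermitian (ptrA M)" unfolding hermitian_def by (simp add: ptrA_adj)
lemma herm_ptrA_ABE: "hermitian M \<Longrightarrow> hermitian (ptrA_ABE M)" unfolding hermitian_def by (simp add: ptrA_ABE_adj)
lemma herm_extB: "hermitian M \<Longrightarrow> hermitian (extB M)" unfolding hermitian_def by (simp add: extB_adj)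
lemma herm_extB': "hermitian M \<Longrightarrow> hermitian (extB' M)" unfolding hermitian_def by (simp add: extB'_adj)
lemma herm_idA: "hermitian M \<Longrightarrow> hermitian (idA M)" unfolding hermitian_def by (simp add: idA_adj)
lemma herm_sandwich: "hermitian X \<Longrightarrow> hermitian N \<Longrightarrow> hermitian (X ** N ** X)"
  unfolding hermitian_def by (simp add: adj_mul matrix_mul_assoc)
lemma mpow_herm: "hermitian M \<Longrightarrow> hermitian (mpow M p)" unfolding mpow_def by (rule mfun_hermitian)

lemma mpow_mul_inv: assumes "hermitian M"
  shows "mpow M (- p) ** mpow M p = mfun (\<lambda>_. 1) M" "mpow M p ** mpow M (- p) = mfun (\<lambda>_. 1) M"
  unfolding mpow_def mfun_prod[OF assms]
  by (rule mfun_cong, simp add: powr_add[symmetric])+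

lemma absorb_right_from_left: assumes "hermitian Q" "hermitian X" "Q ** X = X" shows "X ** Q = X"
proof -
  have "adj (Q ** X) = adj X" using assms(3) by simp
  thus ?thesis using assms(1,2) unfolding adj_mul hermitian_def by simp
qed

lemma mpow_zero_imp: assumes h: "hermitian M" and z: "mpow M a = 0" shows "M = 0"
proof -
  obtain U d where U: "unitary U" and M: "M = U ** rdiag d ** adj U" by (rule mfun_decomp_ex[OF h])
  have "mpow M a = U ** rdiag (\<lambda>i. if d i = 0 then 0 else d i powr a) ** adj U"
    unfolding mpow_def by (rule mfun_eq[OF U M])
  hence "adj U ** (U ** rdiag (\<lambda>i. if d i = 0 then 0 else d i powr a) ** adj U) ** U = 0" using z by simp
  hence "rdiag (\<lambda>i. if d i = 0 then 0 else d i powr a) = 0"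
    by (simp add: matrix_mul_assoc unitary_UU[OF U]) (simp add: matrix_mul_assoc[symmetric] unitary_UU[OF U])
  hence "rdiag (\<lambda>i. if d i = 0 then 0 else d i powr a) $ i $ i = 0" for i by simp
  hence "(if d i = 0 then 0 else d i powr a) = 0" for i unfolding rdiag_def by simp
  hence "d i = 0" for i by (metis powr_eq_0_iff)
  hence "rdiag d = 0" by (simp add: rdiag_def vec_eq_iff)
  thus ?thesis unfolding M by simp
qed

definition OUTm :: "real \<Rightarrow> ('a::finite \<times> 'b::finite \<times> 'e::finite) op \<Rightarrow> ('b \<times> 'e) op" where
  "OUTm \<alpha> \<rho> = extB' (mpow (ptrA (ptrB \<rho>)) ((\<alpha> - 1) / 2)) **
     ptrA_ABE (extB (mpow (ptrB \<rho>) ((1 - \<alpha>) / 2)) ** mpow \<rho> \<alpha> ** extB (mpow (ptrB \<rho>) ((1 - \<alpha>) / 2)))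
     ** extB' (mpow (ptrA (ptrB \<rho>)) ((\<alpha> - 1) / 2))"

lemma renyi_cmi_OUT: "renyi_cmi \<alpha> \<rho> = \<alpha> / (\<alpha> - 1) * ln (Re (mtrace (mpow (OUTm \<alpha> \<rho>) (1 / \<alpha>))))"
  unfolding renyi_cmi_def OUTm_def Let_def ..

lemma OUT_nonzero:
  fixes \<rho> :: "('a::finite \<times> 'b::finite \<times> 'e::finite) op"
  assumes q: "qstate \<rho>"
  shows "OUTm \<alpha> \<rho> \<noteq> 0"
proof
  assume OUT0: "OUTm \<alpha> \<rho> = 0"
  have psd: "psd \<rho>" using q by (rule qstate_psd)
  have h: "hermitian \<rho>" using psd by (rule psd_herm)
  define RAC where "RAC = ptrB \<rho>"
  define RC where "RC = ptrA RAC"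
  have hAC: "hermitian RAC" unfolding RAC_def by (rule herm_ptrB[OF h])
  have hC: "hermitian RC" unfolding RC_def by (rule herm_ptrA[OF hAC])
  define PAC where "PAC = mfun (\<lambda>_. 1) RAC"
  define PC where "PC = mfun (\<lambda>_. 1) RC"
  have hPC: "hermitian PC" unfolding PC_def by (rule mfun_hermitian[OF hC])
  have S1: "extB PAC ** \<rho> = \<rho>" unfolding PAC_def RAC_def
    by (rule support_gen[OF psd herm_ptrB[OF h] extB_one extB_diff extB_adj extB_mul extB_trace])
  have S2: "extB (idA PC) ** \<rho> = \<rho>" unfolding PC_def RC_def RAC_def
  proof (rule support_gen[OF psd herm_ptrA[OF herm_ptrB[OF h]], where E="\<lambda>A. extB (idA A)"])
    show "extB (idA (mat 1)) = mat 1" by (simp add: idA_one extB_one)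
    show "extB (idA (A - B)) = extB (idA A) - extB (idA B)" for A B by (simp add: idA_diff extB_diff)
    show "adj (extB (idA A)) = extB (idA (adj A))" for A by (simp add: idA_adj extB_adj)
    show "extB (idA A) ** extB (idA B) = extB (idA (A ** B))" for A B by (simp add: idA_mul extB_mul)
    show "mtrace (extB (idA A) ** \<rho>) = mtrace (A ** ptrA (ptrB \<rho>))" for A by (simp add: extB_trace idA_trace)
  qed
  have S2': "idA PC ** RAC = RAC" unfolding RAC_def using arg_cong[OF S2, of ptrB] by (simp only: ptrB_extB_mul)
  define t where "t = (1 - \<alpha>) / 2"
  define X :: "('a \<times> 'b \<times> 'e) op" where "X = extB (mpow RAC t)"
  define N where "N = mpow \<rho> \<alpha>"
  define inner where "inner = ptrA_ABE (X ** N ** X)"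
  define Y :: "('b \<times> 'e) op" where "Y = extB' (mpow RC (- t))"
  define G :: "('b \<times> 'e) op" where "G = extB' (mpow RC t)"
  have hX: "hermitian X" unfolding X_def by (intro herm_extB mpow_herm hAC)
  have hN: "hermitian N" unfolding N_def by (intro mpow_herm h)
  have EPX: "extB (idA PC) ** X = X"
    unfolding X_def extB_mul mpow_def using mfun_absorb[OF hAC S2'] by simp
  have hE: "hermitian (extB (idA PC) :: ('a \<times> 'b \<times> 'e) op)" by (intro herm_extB herm_idA hPC)
  have XEP: "X ** extB (idA PC) = X" by (rule absorb_right_from_left[OF hE hX EPX])
  have "OUTm \<alpha> \<rho> = Y ** inner ** Y"
    unfolding OUTm_def Y_def inner_def X_def N_def t_def RC_def RAC_def by (simp add: minus_divide_left)
  hence "Y ** inner ** Y = 0" using OUT0 by simp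
  hence "G ** (Y ** inner ** Y) ** G = 0" by simp
  moreover have "G ** (Y ** inner ** Y) ** G = (G ** Y) ** inner ** (Y ** G)"
    by (simp only: matrix_mul_assoc)
  moreover have "G ** Y = extB' PC" "Y ** G = extB' PC"
    unfolding G_def Y_def extB'_mul PC_def using mpow_mul_inv[OF hC, of t] by simp_all
  ultimately have "extB' PC ** inner ** extB' PC = 0" by simp
  moreover have "extB' PC ** inner ** extB' PC = inner"
  proof -
    have "X ** N ** X ** extB (idA PC) = X ** N ** X" by (simp only: matrix_mul_assoc[symmetric] XEP)
    moreover have "extB (idA PC) ** (X ** N ** X) = X ** N ** X" by (simp only: matrix_mul_assoc EPX)
    ultimately show ?thesis unfolding inner_def link_left link_right by simp
  qed
  ultimately have "inner = 0" by simp
  hence "Re (mtrace (X ** N ** X)) = 0" unfolding inner_def using mtrace_ptrA_ABE by (metis mtrace_zero zero_complex.sel(1))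
  moreover have "psd N" unfolding N_def mpow_def by (rule mfun_psd[OF h]) simp
  ultimately have "N ** X = 0" using psd_trace_zero hX by blast
  hence "adj (N ** X) = 0" by simp
  hence XN: "X ** N = 0" using hX hN unfolding adj_mul hermitian_def by simp
  have "extB (mpow RAC (- t)) ** X = extB PAC"
    unfolding X_def extB_mul PAC_def using mpow_mul_inv[OF hAC, of t] by simp
  hence "extB PAC ** N = 0" using XN by (metis matrix_mul_assoc times0_right)
  moreover have "extB PAC ** N = N" unfolding N_def mpow_def by (rule mfun_absorb[OF h S1])
  ultimately have "N = 0" by simp
  hence "\<rho> = 0" unfolding N_def by (rule mpow_zero_imp[OF h])
  thus False using q unfolding qstate_def mtrace_def by simp
qed

lemma trace_mpow_pos: assumes h: "hermitian M" and nz: "M \<noteq> 0"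
  shows "Re (mtrace (mpow M p)) > 0"
proof -
  obtain U d where U: "unitary U" and M: "M = U ** rdiag d ** adj U" by (rule mfun_decomp_ex[OF h])
  have "mpow M p = U ** rdiag (\<lambda>i. if d i = 0 then 0 else d i powr p) ** adj U"
    unfolding mpow_def by (rule mfun_eq[OF U M])
  hence tr: "Re (mtrace (mpow M p)) = (\<Sum>i\<in>UNIV. if d i = 0 then 0 else d i powr p)"
    by (simp add: mtrace_decomp[OF U])
  have "\<exists>i. d i \<noteq> 0"
  proof (rule ccontr)
    assume "\<not> ?thesis"
    hence "rdiag d = 0" by (simp add: rdiag_def vec_eq_iff)
    thus False using nz unfolding M by simp
  qed
  then obtain i where i: "d i \<noteq> 0" by blast
  have "0 < (\<Sum>i\<in>UNIV. if d i = 0 then 0 else d i powr p)"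
    by (rule sum_pos2[of UNIV i]) (use i in auto)
  thus ?thesis unfolding tr .
qed

lemma scaleR_decomp: "r *\<^sub>R (U ** rdiag d ** adj U) = U ** rdiag (\<lambda>i. r * d i) ** adj U"
proof -
  have "rdiag (\<lambda>i. r * d i) = r *\<^sub>R rdiag d"
    by (simp add: rdiag_def vec_eq_iff scaleR_conv_of_real[where 'a=complex])
  thus ?thesis by (simp add: scalar_matrix_assoc matrix_scalar_ac)
qed

lemma mpow_scale: assumes h: "hermitian M" and r: "r \<ge> 0"
  shows "mpow (r *\<^sub>R M) p = (r powr p) *\<^sub>R mpow M p"
proof -
  obtain U d where U: "unitary U" and M: "M = U ** rdiag d ** adj U" by (rule mfun_decomp_ex[OF h])
  have rM: "r *\<^sub>R M = U ** rdiag (\<lambda>i. r * d i) ** adj U" unfolding M by (rule scaleR_decomp)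
  have "mpow (r *\<^sub>R M) p = U ** rdiag (\<lambda>i. if r * d i = 0 then 0 else (r * d i) powr p) ** adj U"
    unfolding mpow_def by (rule mfun_eq[OF U rM])
  also have "(\<lambda>i. if r * d i = 0 then 0 else (r * d i) powr p) = (\<lambda>i. r powr p * (if d i = 0 then 0 else d i powr p))"
    using r by (auto simp: powr_mult fun_eq_iff)
  also have "U ** rdiag \<dots> ** adj U = (r powr p) *\<^sub>R (U ** rdiag (\<lambda>i. if d i = 0 then 0 else d i powr p) ** adj U)"
    by (rule scaleR_decomp[symmetric])
  also have "U ** rdiag (\<lambda>i. if d i = 0 then 0 else d i powr p) ** adj U = mpow M p"
    unfolding mpow_def by (rule mfun_eq[OF U M, symmetric])
  finally show ?thesis .
qed

definition blk :: "('i::finite \<Rightarrow> 'm::finite \<times> 'x::finite) \<Rightarrow> ('x \<Rightarrow> 'm op) \<Rightarrow> 'i op" where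
  "blk g M = (\<chi> i j. if snd (g i) = snd (g j) then M (snd (g i)) $ fst (g i) $ fst (g j) else 0)"

lemma blk_entry: "blk g M $ i $ j = (if snd (g i) = snd (g j) then M (snd (g i)) $ fst (g i) $ fst (g j) else 0)"
  by (simp add: blk_def)

lemma sum_bij_reindex: assumes "bij g"
  shows "(\<Sum>k\<in>UNIV. F k) = (\<Sum>m\<in>UNIV. \<Sum>x\<in>UNIV. F (inv g (m, x)))"
proof -
  have "bij_betw (inv g) UNIV UNIV" using assms by (simp add: bij_imp_bij_inv)
  hence "(\<Sum>q\<in>UNIV. F (inv g q)) = (\<Sum>k\<in>UNIV. F k)" by (rule sum.reindex_bij_betw)
  thus ?thesis by (simp add: sum_univ_prod[where f="\<lambda>q. F (inv g q)"])
qed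

lemma blk_mul: assumes b: "bij g"
  shows "blk g M ** blk g N = blk g (\<lambda>x. M x ** N x)"
proof -
  have gi: "g (inv g q) = q" for q using b by (simp add: bij_is_surj surj_f_inv_f)
  have "(blk g M ** blk g N) $ i $ j = blk g (\<lambda>x. M x ** N x) $ i $ j" for i j
  proof -
    have "(blk g M ** blk g N) $ i $ j = (\<Sum>m\<in>UNIV. \<Sum>x\<in>UNIV.
        blk g M $ i $ inv g (m,x) * blk g N $ inv g (m,x) $ j)"
      unfolding matrix_matrix_mult_def vec_lambda_beta by (rule sum_bij_reindex[OF b])
    also have "\<dots> = (\<Sum>m\<in>UNIV. \<Sum>x\<in>UNIV. if x = snd (g i) then
        (if snd (g i) = snd (g j) then M (snd (g i)) $ fst (g i) $ m * N (snd (g i)) $ m $ fst (g j) else 0) else 0)"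
      by (intro sum.cong refl) (auto simp: blk_entry gi)
    also have "\<dots> = blk g (\<lambda>x. M x ** N x) $ i $ j"
      by (simp add: blk_entry matrix_matrix_mult_def)
    finally show ?thesis .
  qed
  thus ?thesis by (simp add: vec_eq_iff)
qed

lemma blk_adj: "adj (blk g M) = blk g (\<lambda>x. adj (M x))"
  by (simp add: vec_eq_iff blk_entry adj_def)

lemma blk_rdiag: assumes "inj g"
  shows "blk g (\<lambda>x. rdiag (D x)) = rdiag (\<lambda>i. D (snd (g i)) (fst (g i)))"
proof -
  have "g i = g j \<longleftrightarrow> i = j" for i j using assms by (auto simp: inj_def)
  hence "snd (g i) = snd (g j) \<and> fst (g i) = fst (g j) \<longleftrightarrow> i = j" for i j by (metis prod.expand)
  thus ?thesis by (auto simp: vec_eq_iff blk_entry rdiag_def)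
qed

lemma blk_one: assumes "inj g" shows "blk g (\<lambda>x. mat 1) = mat 1"
proof -
  have "g i = g j \<longleftrightarrow> i = j" for i j using assms by (auto simp: inj_def)
  hence "snd (g i) = snd (g j) \<and> fst (g i) = fst (g j) \<longleftrightarrow> i = j" for i j by (metis prod.expand)
  thus ?thesis by (auto simp: vec_eq_iff blk_entry mat_def)
qed

lemma blk_unitary: assumes b: "bij g" and U: "\<And>x. unitary (U x)" shows "unitary (blk g U)"
  unfolding unitary_def blk_adj blk_mul[OF b] using U unfolding unitary_def
  by (simp add: blk_one[OF bij_is_inj[OF b]])

lemma mfun_blk: assumes b: "bij g" and h: "\<And>x. hermitian (M x)"
  shows "mfun f (blk g M) = blk g (\<lambda>x. mfun f (M x))"
proof -
  have "\<forall>x. \<exists>U d. unitary U \<and> M x = U ** rdiag d ** adj U" using spectral[OF h] by blast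
  then obtain U d where U: "\<And>x. unitary (U x)" and M: "\<And>x. M x = U x ** rdiag (d x) ** adj (U x)"
    by metis
  define D where "D i = d (snd (g i)) (fst (g i))" for i
  have "blk g M = blk g U ** rdiag D ** adj (blk g U)"
    unfolding D_def blk_adj blk_mul[OF b] blk_rdiag[OF bij_is_inj[OF b], symmetric] M[symmetric] ..
  from mfun_eq[OF blk_unitary[OF b U] this]
  have "mfun f (blk g M) = blk g U ** rdiag (\<lambda>i. if D i = 0 then 0 else f (D i)) ** adj (blk g U)" .
  also have "\<dots> = blk g (\<lambda>x. U x ** rdiag (\<lambda>m. if d x m = 0 then 0 else f (d x m)) ** adj (U x))"
    unfolding D_def blk_adj blk_mul[OF b]
    by (subst blk_rdiag[OF bij_is_inj[OF b], symmetric]) (simp only: blk_mul[OF b])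
  also have "\<dots> = blk g (\<lambda>x. mfun f (M x))" using mfun_eq[OF U M] by simp
  finally show ?thesis .
qed

lemma mtrace_blk: assumes b: "bij g" shows "mtrace (blk g M) = (\<Sum>x\<in>UNIV. mtrace (M x))"
proof -
  have gi: "g (inv g q) = q" for q using b by (simp add: bij_is_surj surj_f_inv_f)
  have "mtrace (blk g M) = (\<Sum>m\<in>UNIV. \<Sum>x\<in>UNIV. blk g M $ inv g (m,x) $ inv g (m,x))"
    unfolding mtrace_def by (rule sum_bij_reindex[OF b])
  also have "\<dots> = (\<Sum>m\<in>UNIV. \<Sum>x\<in>UNIV. M x $ m $ m)" by (simp add: blk_entry gi)
  also have "\<dots> = (\<Sum>x\<in>UNIV. mtrace (M x))" unfolding mtrace_def by (rule sum.swap)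
  finally show ?thesis .
qed

lemma blk_herm: "(\<And>x. hermitian (M x)) \<Longrightarrow> hermitian (blk g M)"
  unfolding hermitian_def blk_adj by simp

definition g3 :: "('a::finite \<times> 'b::finite \<times> ('c::finite \<times> 'x::finite)) \<Rightarrow> (('a \<times> 'b \<times> 'c) \<times> 'x)" where
  "g3 = (\<lambda>(a,b,c,x). ((a,b,c),x))"
definition g2 :: "('u::finite \<times> ('c::finite \<times> 'x::finite)) \<Rightarrow> (('u \<times> 'c) \<times> 'x)" where
  "g2 = (\<lambda>(u,c,x). ((u,c),x))"
definition g1 :: "('c::finite \<times> 'x::finite) \<Rightarrow> ('c \<times> 'x)" where
  "g1 = (\<lambda>q. q)"

lemma g3_simp[simp]: "g3 (a,b,c,x) = ((a,b,c),x)" by (simp add: g3_def)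
lemma g2_simp[simp]: "g2 (u,c,x) = ((u,c),x)" by (simp add: g2_def)
lemma g1_simp[simp]: "g1 q = q" by (simp add: g1_def)

lemma bij_g3: "bij g3"
  unfolding bij_def inj_def surj_def g3_def by (auto simp: split_paired_all)
lemma bij_g2: "bij g2"
  unfolding bij_def inj_def surj_def g2_def by (auto simp: split_paired_all)
lemma bij_g1: "bij g1"
  unfolding g1_def by (simp add: bij_id[unfolded id_def])

lemma blk3_entry: "blk g3 M $ (a,b,c,x) $ (a',b',c',x') = (if x = x' then M x $ (a,b,c) $ (a',b',c') else 0)"
  by (simp add: blk_entry)
lemma blk2_entry: "blk g2 M $ (u,c,x) $ (u',c',x') = (if x = x' then M x $ (u,c) $ (u',c') else 0)"
  by (simp add: blk_entry)
lemma blk1_entry: "blk g1 M $ (c,x) $ (c',x') = (if x = x' then M x $ c $ c' else 0)"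
  by (simp add: blk_entry)

lemma cq_blk: "cq_state p \<rho>x = blk g3 (\<lambda>x. p x *\<^sub>R \<rho>x x)"
  by (simp add: vec_eq_iff split_paired_all cq_state_def blk3_entry scaleR_conv_of_real[where 'a=complex])

lemma ptrB_blk: "ptrB (blk g3 M) = blk g2 (\<lambda>x. ptrB (M x))"
  by (simp add: vec_eq_iff split_paired_all ptrB_entry blk3_entry blk2_entry)
lemma ptrA_blk: "ptrA (blk g2 M) = blk g1 (\<lambda>x. ptrA (M x))"
  by (simp add: vec_eq_iff split_paired_all ptrA_entry blk1_entry blk2_entry)
lemma extB_blk: "extB (blk g2 P) = blk g3 (\<lambda>x. extB (P x))"
  by (simp add: vec_eq_iff split_paired_all extB_entry blk3_entry blk2_entry)
lemma ptrA_ABE_blk: "ptrA_ABE (blk g3 M) = blk g2 (\<lambda>x. ptrA_ABE (M x))"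
  by (simp add: vec_eq_iff split_paired_all ptrA_ABE_entry blk3_entry blk2_entry)
lemma extB'_blk: "extB' (blk g1 P) = blk g2 (\<lambda>x. extB' (P x))"
  by (simp add: vec_eq_iff split_paired_all extB'_entry blk1_entry blk2_entry)

lemma herm_scaleR: "hermitian A \<Longrightarrow> hermitian (r *\<^sub>R A)"
  unfolding hermitian_def by (simp add: adj_scaleR)

lemma mpow_blk_scale: assumes b: "bij g" and h: "\<And>x. hermitian (A x)" and r: "\<And>x. r x \<ge> 0"
  shows "mpow (blk g (\<lambda>x. r x *\<^sub>R A x)) q = blk g (\<lambda>x. (r x powr q) *\<^sub>R mpow (A x) q)"
  unfolding mpow_def mfun_blk[OF b herm_scaleR[OF h]] using mpow_scale[OF h r] unfolding mpow_def by simp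

lemma sandwich_scale: "((a::real) *\<^sub>R A) ** (b *\<^sub>R B) ** (a *\<^sub>R A) = (a * b * a) *\<^sub>R (A ** B ** (A :: 'n::finite op))"
  by (simp add: scalar_matrix_assoc[symmetric] matrix_scalar_ac)

lemma sandwich_scale': "((a::real) *\<^sub>R A) ** (b *\<^sub>R B) ** (c *\<^sub>R A) = (a * b * c) *\<^sub>R (A ** B ** (A :: 'n::finite op))"
  by (simp add: scalar_matrix_assoc[symmetric] matrix_scalar_ac)

lemma OUT_blk:
  fixes \<rho>x :: "'x::finite \<Rightarrow> ('a::finite \<times> 'b::finite \<times> 'c::finite) op"
  assumes p: "\<And>x. p x \<ge> 0" and h: "\<And>x. hermitian (\<rho>x x)"
  shows "OUTm \<alpha> (cq_state p \<rho>x) = blk g2 (\<lambda>x.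
     (p x powr ((\<alpha> - 1) / 2) * (p x powr ((1 - \<alpha>) / 2) * p x powr \<alpha> * p x powr ((1 - \<alpha>) / 2)) * p x powr ((\<alpha> - 1) / 2))
       *\<^sub>R OUTm \<alpha> (\<rho>x x))"
proof -
  define s where "s = (\<alpha> - 1) / 2"
  define t where "t = (1 - \<alpha>) / 2"
  have hB: "hermitian (ptrB (\<rho>x x))" for x by (rule herm_ptrB[OF h])
  have hC: "hermitian (ptrA (ptrB (\<rho>x x)))" for x by (rule herm_ptrA[OF hB])
  have PB: "ptrB (cq_state p \<rho>x) = blk g2 (\<lambda>x. p x *\<^sub>R ptrB (\<rho>x x))"
    unfolding cq_blk ptrB_blk ptrB_scale ..
  have PC: "ptrA (ptrB (cq_state p \<rho>x)) = blk g1 (\<lambda>x. p x *\<^sub>R ptrA (ptrB (\<rho>x x)))"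
    unfolding PB ptrA_blk ptrA_scale ..
  have X: "extB (mpow (ptrB (cq_state p \<rho>x)) t) = blk g3 (\<lambda>x. (p x powr t) *\<^sub>R extB (mpow (ptrB (\<rho>x x)) t))"
    unfolding PB mpow_blk_scale[OF bij_g2 hB p] extB_blk extB_scale ..
  have N: "mpow (cq_state p \<rho>x) \<alpha> = blk g3 (\<lambda>x. (p x powr \<alpha>) *\<^sub>R mpow (\<rho>x x) \<alpha>)"
    unfolding cq_blk mpow_blk_scale[OF bij_g3 h p] ..
  have Y: "extB' (mpow (ptrA (ptrB (cq_state p \<rho>x))) s) = blk g2 (\<lambda>x. (p x powr s) *\<^sub>R extB' (mpow (ptrA (ptrB (\<rho>x x))) s))"
    unfolding PC mpow_blk_scale[OF bij_g1 hC p] extB'_blk extB'_scale ..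
  show ?thesis
    unfolding OUTm_def s_def[symmetric] t_def[symmetric] X N Y blk_mul[OF bij_g3] blk_mul[OF bij_g2]
      ptrA_ABE_blk sandwich_scale ptrA_ABE_scale sandwich_scale' ..
qed

lemma herm_OUT: assumes "hermitian \<rho>" shows "hermitian (OUTm \<alpha> \<rho>)"
  unfolding OUTm_def
  by (intro herm_sandwich herm_extB' mpow_herm herm_ptrA herm_ptrB herm_ptrA_ABE herm_extB assms)

lemma mtrace_scaleR: "mtrace (r *\<^sub>R A) = complex_of_real r * mtrace A"
  by (simp add: mtrace_def scaleR_conv_of_real[where 'a=complex] sum_distrib_left)

lemma powr_factor: assumes p: "(p::real) \<ge> 0" and a: "\<alpha> > 0"
  shows "(p powr ((\<alpha> - 1) / 2) * (p powr ((1 - \<alpha>) / 2) * p powr \<alpha> * p powr ((1 - \<alpha>) / 2)) * p powr ((\<alpha> - 1) / 2))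
     powr (1 / \<alpha>) = p"
proof (cases "p = 0")
  case True thus ?thesis by simp
next
  case False
  have "p powr ((\<alpha> - 1) / 2) * (p powr ((1 - \<alpha>) / 2) * p powr \<alpha> * p powr ((1 - \<alpha>) / 2)) * p powr ((\<alpha> - 1) / 2)
      = p powr ((\<alpha> - 1) / 2 + ((1 - \<alpha>) / 2 + \<alpha> + (1 - \<alpha>) / 2) + (\<alpha> - 1) / 2)"
    by (simp only: powr_add)
  also have "(\<alpha> - 1) / 2 + ((1 - \<alpha>) / 2 + \<alpha> + (1 - \<alpha>) / 2) + (\<alpha> - 1) / 2 = \<alpha>" by (simp add: field_simps)
  finally have e: "p powr ((\<alpha> - 1) / 2) * (p powr ((1 - \<alpha>) / 2) * p powr \<alpha> * p powr ((1 - \<alpha>) / 2)) * p powr ((\<alpha> - 1) / 2) = p powr \<alpha>" .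
  have "(p powr \<alpha>) powr (1 / \<alpha>) = p" using a p by (simp add: powr_powr powr_one)
  thus ?thesis unfolding e .
qed

theorem lemma3:
  fixes \<alpha> :: real
    and p :: "'x::finite \<Rightarrow> real"
    and \<rho>x :: "'x \<Rightarrow> ('a::finite \<times> 'b::finite \<times> 'c::finite) op"
  assumes "0 < \<alpha>" and "\<alpha> \<noteq> 1"
    and "\<And>x. 0 \<le> p x" and "(\<Sum>x\<in>UNIV. p x) = 1"
    and "\<And>x. qstate (\<rho>x x)"
  shows "renyi_cmi \<alpha> (cq_state p \<rho>x) =
    \<alpha> / (\<alpha> - 1) * ln (\<Sum>x\<in>UNIV. p x * exp (((\<alpha> - 1) / \<alpha>) * renyi_cmi \<alpha> (\<rho>x x)))"
proof -
  have h: "hermitian (\<rho>x x)" for x using assms(5) by (intro psd_herm qstate_psd)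
  define T where "T x = Re (mtrace (mpow (OUTm \<alpha> (\<rho>x x)) (1 / \<alpha>)))" for x
  have Tpos: "T x > 0" for x
    unfolding T_def by (rule trace_mpow_pos[OF herm_OUT[OF h] OUT_nonzero[OF assms(5)]])
  define c where "c x = p x powr ((\<alpha> - 1) / 2) * (p x powr ((1 - \<alpha>) / 2) * p x powr \<alpha> * p x powr ((1 - \<alpha>) / 2)) * p x powr ((\<alpha> - 1) / 2)" for x
  have c0: "c x \<ge> 0" for x unfolding c_def by simp
  have cp: "c x powr (1 / \<alpha>) = p x" for x unfolding c_def by (rule powr_factor[OF assms(3) assms(1)])
  have "mpow (OUTm \<alpha> (cq_state p \<rho>x)) (1 / \<alpha>) = blk g2 (\<lambda>x. p x *\<^sub>R mpow (OUTm \<alpha> (\<rho>x x)) (1 / \<alpha>))"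
    unfolding OUT_blk[OF assms(3) h] c_def[symmetric] mpow_blk_scale[OF bij_g2 herm_OUT[OF h] c0] cp ..
  hence "Re (mtrace (mpow (OUTm \<alpha> (cq_state p \<rho>x)) (1 / \<alpha>))) = (\<Sum>x\<in>UNIV. p x * T x)"
    unfolding T_def by (simp add: mtrace_blk[OF bij_g2] mtrace_scaleR Re_sum)
  hence L: "renyi_cmi \<alpha> (cq_state p \<rho>x) = \<alpha> / (\<alpha> - 1) * ln (\<Sum>x\<in>UNIV. p x * T x)"
    unfolding renyi_cmi_OUT by simp
  have "exp (((\<alpha> - 1) / \<alpha>) * renyi_cmi \<alpha> (\<rho>x x)) = T x" for x
  proof -
    have "((\<alpha> - 1) / \<alpha>) * renyi_cmi \<alpha> (\<rho>x x) = ln (T x)"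
      unfolding renyi_cmi_OUT T_def[symmetric] using assms(1,2) by (simp add: field_simps)
    thus ?thesis using Tpos[of x] by simp
  qed
  thus ?thesis unfolding L by simp
qed

end
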